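(* Let $Q=\langle x_1,\ldots,x_n\mid r_1,\ldots,r_m\rangle$ be a finitely presented connected quandle, $X$ a quandle, $A$ an abelian group and $\theta:X^2\to A$ a quandle $2$-cocycle. For any quandle homomorphism $\rho:Q\to X$, \[ E_0\bigl(A(Q,\rho;f_{\theta},0)\bigr)=\bigl(\{1\cdot a-1\cdot 0_A\mid a\in{\rm Im}(\theta\circ\rho_{\ast})\}\bigr) \] as ideals of $\mathbb{Z}[A]$, where $\rho_{\ast}:H^Q_2(Q)\to H^Q_2(X)$ is the homomorphism induced by $\rho$ and $\theta:H^Q_2(X)\to A$ is the homomorphism induced by $\theta$.
   Context: A quandle is a set $X$ with operation $(x,y)\mapsto x^y$ such that $x^x=x$, $z\mapsto z^y$ is bijective (inverse $x\mapsto x^{y^{-1}}$), and $(x^y)^z=(x^z)^{(y^z)}$; write $x^{yz}=(x^y)^z$. $Q$ is connected if for all $x,y\in Q$ there are $z_1,\dots,z_k\in Q$, $\varepsilon_i\in\{\pm1\}$ with $x^{z_1^{\varepsilon_1}\cdots z_k^{\varepsilon_k}}=y$. A presentation $\langle S\mid R\rangle$ is the quotient of the free quandle $FQ(S)$ by the smallest congruence containing $R\subset FQ(S)^2$. A quandle $2$-cocycle is $\theta:X^2\to A$ with $\theta(x,x)=0_A$ and $\theta(x,y)+\theta(x^y,z)=\theta(x,z)+\theta(x^z,y^z)$. Quandle homology: $C^R_n(X)$ is the free abelian group on $X^n$ ($0$ for $n\le0$), with $\partial(x_1,\dots,x_n)=\sum_{i=2}^n(-1)^i\bigl[(x_1,\dots,\widehat{x_i},\dots,x_n)-(x_1^{x_i},\dots,x_{i-1}^{x_i},x_{i+1},\dots,x_n)\bigr]$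 for $n\ge2$ and $\partial=0$ for $n\le1$. $C^D_n(X)$ is the subcomplex generated by tuples with $x_i=x_{i+1}$ for some $i$; $H^Q_n(X)$ is the homology of $C^R_n(X)/C^D_n(X)$. The linear extension of a $2$-cocycle $\theta$ vanishes on boundaries and degenerate chains, so induces a homomorphism $\theta:H^Q_2(X)\to A$; a quandle homomorphism $\rho$ induces $\rho_*$ on $H^Q_2$. In $\mathbb{Z}[A]$, $1\cdot a$ is the basis element of $a\in A$. With $f_\theta(x,y)=1\cdot\theta(x,y)$, define for each $j$ the map $\partial_j:FQ(S)\to\mathbb{Z}[A]$ by $\partial_j(x^y)=f_\theta(\rho(x),\rho(y))\,\partial_j(x)$ (elements projected to $Q$) and $\partial_j(x_i)=\delta_{ij}$; for a relator $r=(w_1,w_2)$ put $\partial_j(r)=\partial_j(w_1)-\partial_j(w_2)$. $A(Q,\rho;f_\theta,0)$ is the $m\times n$ matrix $(\partial_j(r_i))$. $E_0$ of an $m\times n$ matrix is the ideal generated by its $n\times n$ minors if $n\le m$, and $0$ if $m<n$. *)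

theory Defs
  imports "HOL-Library.Poly_Mapping" "Jordan_Normal_Form.Determinant" "Jordan_Normal_Form.DL_Submatrix"
begin

section \<open>Quandles (carrier-based, operation x \<triangleright> y written op x y for x^y)\<close>

definition quandle :: "'a set \<Rightarrow> ('a \<Rightarrow> 'a \<Rightarrow> 'a) \<Rightarrow> bool" where
  "quandle X op \<longleftrightarrow>
     (\<forall>x\<in>X. \<forall>y\<in>X. op x y \<in> X) \<and>
     (\<forall>x\<in>X. op x x = x) \<and>
     (\<forall>y\<in>X. bij_betw (\<lambda>z. op z y) X X) \<and>
     (\<forall>x\<in>X. \<forall>y\<in>X. \<forall>z\<in>X. op (op x y) z = op (op x z) (op y z))"

definition qinv :: "'a set \<Rightarrow> ('a \<Rightarrow> 'a \<Rightarrow> 'a) \<Rightarrow> 'a \<Rightarrow> 'a \<Rightarrow> 'a" where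
  "qinv X op x y = inv_into X (\<lambda>z. op z y) x"

definition quandle_connected :: "'a set \<Rightarrow> ('a \<Rightarrow> 'a \<Rightarrow> 'a) \<Rightarrow> bool" where
  "quandle_connected X op \<longleftrightarrow> quandle X op \<and>
     (\<forall>x\<in>X. \<forall>y\<in>X. (x, y) \<in>
        ({(a, op a z) | a z. a \<in> X \<and> z \<in> X} \<union> {(a, qinv X op a z) | a z. a \<in> X \<and> z \<in> X})\<^sup>*)"

definition quandle_hom ::
  "'a set \<Rightarrow> ('a \<Rightarrow> 'a \<Rightarrow> 'a) \<Rightarrow> 'c set \<Rightarrow> ('c \<Rightarrow> 'c \<Rightarrow> 'c) \<Rightarrow> ('a \<Rightarrow> 'c) \<Rightarrow> bool" where
  "quandle_hom X op Y op' f \<longleftrightarrow> (\<forall>x\<in>X. f x \<in> Y) \<and> (\<forall>x\<in>X. \<forall>y\<in>X. f (op x y) = op' (f x) (f y))"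

definition quandle_2cocycle :: "'a set \<Rightarrow> ('a \<Rightarrow> 'a \<Rightarrow> 'a) \<Rightarrow> ('a \<Rightarrow> 'a \<Rightarrow> 'b::ab_group_add) \<Rightarrow> bool" where
  "quandle_2cocycle X op \<theta> \<longleftrightarrow>
     (\<forall>x\<in>X. \<theta> x x = 0) \<and>
     (\<forall>x\<in>X. \<forall>y\<in>X. \<forall>z\<in>X. \<theta> x y + \<theta> (op x y) z = \<theta> x z + \<theta> (op x z) (op y z))"

text \<open>Terms: generator, x^y, x^(y^-1).\<close>
datatype 'v fqterm = Gen 'v | Rop "'v fqterm" "'v fqterm" | Rinv "'v fqterm" "'v fqterm"

fun gens :: "'v fqterm \<Rightarrow> 'v set" where
  "gens (Gen v) = {v}"
| "gens (Rop s t) = gens s \<union> gens t"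
| "gens (Rinv s t) = gens s \<union> gens t"

definition wf_term :: "nat \<Rightarrow> nat fqterm \<Rightarrow> bool" where
  "wf_term n t \<longleftrightarrow> gens t \<subseteq> {..<n}"

text \<open>The smallest congruence on terms in x_0,...,x_(n-1) containing the quandle axioms
  (hence the free quandle FQ(S)) and the relators R.\<close>
inductive_set pcong :: "nat \<Rightarrow> (nat fqterm \<times> nat fqterm) set \<Rightarrow> (nat fqterm \<times> nat fqterm) set"
  for n R where
  refl: "wf_term n t \<Longrightarrow> (t, t) \<in> pcong n R"
| sym: "(s, t) \<in> pcong n R \<Longrightarrow> (t, s) \<in> pcong n R"
| trans: "(s, t) \<in> pcong n R \<Longrightarrow> (t, u) \<in> pcong n R \<Longrightarrow> (s, u) \<in> pcong n R"
| rel: "(s, t) \<in> R \<Longrightarrow> wf_term n s \<Longrightarrow> wf_term n t \<Longrightarrow> (s, t) \<in> pcong n R"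
| cong_op: "(a, b) \<in> pcong n R \<Longrightarrow> (c, d) \<in> pcong n R \<Longrightarrow> (Rop a c, Rop b d) \<in> pcong n R"
| cong_inv: "(a, b) \<in> pcong n R \<Longrightarrow> (c, d) \<in> pcong n R \<Longrightarrow> (Rinv a c, Rinv b d) \<in> pcong n R"
| idem: "wf_term n a \<Longrightarrow> (Rop a a, a) \<in> pcong n R"
| inv_op: "wf_term n a \<Longrightarrow> wf_term n b \<Longrightarrow> (Rop (Rinv a b) b, a) \<in> pcong n R"
| op_inv: "wf_term n a \<Longrightarrow> wf_term n b \<Longrightarrow> (Rinv (Rop a b) b, a) \<in> pcong n R"
| dist: "wf_term n a \<Longrightarrow> wf_term n b \<Longrightarrow> wf_term n c \<Longrightarrow>
          (Rop (Rop a b) c, Rop (Rop a c) (Rop b c)) \<in> pcong n R"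

definition pres_class :: "nat \<Rightarrow> (nat fqterm \<times> nat fqterm) set \<Rightarrow> nat fqterm \<Rightarrow> nat fqterm set" where
  "pres_class n R t = pcong n R `` {t}"

definition pres_car :: "nat \<Rightarrow> (nat fqterm \<times> nat fqterm) set \<Rightarrow> nat fqterm set set" where
  "pres_car n R = {t. wf_term n t} // pcong n R"

definition pres_op :: "nat \<Rightarrow> (nat fqterm \<times> nat fqterm) set \<Rightarrow> nat fqterm set \<Rightarrow> nat fqterm set \<Rightarrow> nat fqterm set" where
  "pres_op n R C D = pres_class n R (Rop (SOME c. c \<in> C) (SOME d. d \<in> D))"

definition chains :: "'x set \<Rightarrow> ('x \<Rightarrow>\<^sub>0 int) set" where
  "chains S = {c. Poly_Mapping.keys c \<subseteq> S}"

definition bd2 :: "('a \<Rightarrow> 'a \<Rightarrow> 'a) \<Rightarrow> ('a \<times> 'a \<Rightarrow>\<^sub>0 int) \<Rightarrow> ('a \<Rightarrow>\<^sub>0 int)" where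
  "bd2 op = frag_extend (\<lambda>(x, y). frag_of x - frag_of (op x y))"

definition bd3 :: "('a \<Rightarrow> 'a \<Rightarrow> 'a) \<Rightarrow> ('a \<times> 'a \<times> 'a \<Rightarrow>\<^sub>0 int) \<Rightarrow> ('a \<times> 'a \<Rightarrow>\<^sub>0 int)" where
  "bd3 op = frag_extend (\<lambda>(x, y, z).
      (frag_of (x, z) - frag_of (op x y, z)) - (frag_of (x, y) - frag_of (op x z, op y z)))"

definition degen2 :: "'a set \<Rightarrow> ('a \<times> 'a \<Rightarrow>\<^sub>0 int) set" where
  "degen2 X = chains {(x, x) | x. x \<in> X}"

text \<open>Denominator of H^Q_2 (viewed in C^R_2): boundaries of 3-chains plus degenerate chains.
  (C^D_1 = 0, so a class in C^Q_2 is a cycle iff its representative has boundary 0.)\<close>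
definition B2 :: "'a set \<Rightarrow> ('a \<Rightarrow> 'a \<Rightarrow> 'a) \<Rightarrow> ('a \<times> 'a \<Rightarrow>\<^sub>0 int) set" where
  "B2 X op = {bd3 op d + e | d e. d \<in> chains (X \<times> X \<times> X) \<and> e \<in> degen2 X}"

definition hclass :: "'a set \<Rightarrow> ('a \<Rightarrow> 'a \<Rightarrow> 'a) \<Rightarrow> ('a \<times> 'a \<Rightarrow>\<^sub>0 int) \<Rightarrow> ('a \<times> 'a \<Rightarrow>\<^sub>0 int) set" where
  "hclass X op z = {z + k | k. k \<in> B2 X op}"

definition H2Q :: "'a set \<Rightarrow> ('a \<Rightarrow> 'a \<Rightarrow> 'a) \<Rightarrow> ('a \<times> 'a \<Rightarrow>\<^sub>0 int) set set" where
  "H2Q X op = {hclass X op z | z. z \<in> chains (X \<times> X) \<and> bd2 op z = 0}"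

definition induced_H2 ::
  "'c set \<Rightarrow> ('c \<Rightarrow> 'c \<Rightarrow> 'c) \<Rightarrow> ('a \<Rightarrow> 'c) \<Rightarrow> ('a \<times> 'a \<Rightarrow>\<^sub>0 int) set \<Rightarrow> ('c \<times> 'c \<Rightarrow>\<^sub>0 int) set" where
  "induced_H2 Y op' f h = hclass Y op' (frag_extend (\<lambda>(x, y). frag_of (f x, f y)) (SOME z. z \<in> h))"

definition int_smul :: "int \<Rightarrow> 'b::ab_group_add \<Rightarrow> 'b" where
  "int_smul k a = (if 0 \<le> k then (\<Sum>i<nat k. a) else - (\<Sum>i<nat (- k). a))"

definition cocycle_lin :: "('a \<Rightarrow> 'a \<Rightarrow> 'b::ab_group_add) \<Rightarrow> ('a \<times> 'a \<Rightarrow>\<^sub>0 int) \<Rightarrow> 'b" where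
  "cocycle_lin \<theta> z = (\<Sum>p\<in>Poly_Mapping.keys z. int_smul (Poly_Mapping.lookup z p) (\<theta> (fst p) (snd p)))"

definition cocycle_H2 :: "('a \<Rightarrow> 'a \<Rightarrow> 'b::ab_group_add) \<Rightarrow> ('a \<times> 'a \<Rightarrow>\<^sub>0 int) set \<Rightarrow> 'b" where
  "cocycle_H2 \<theta> h = cocycle_lin \<theta> (SOME z. z \<in> h)"

text \<open>Z[A] is represented by finitely supported int-valued functions on A (convolution product); 1\<cdot>a is Poly_Mapping.single a 1.\<close>
abbreviation gr :: "'b \<Rightarrow> 'b \<Rightarrow>\<^sub>0 int" where
  "gr a \<equiv> Poly_Mapping.single a 1"

text \<open>partial_j, where ev t = rho(image of t in Q). The clause for x^(y^-1) is forced by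
  (x^(y^-1))^y = x in FQ(S).\<close>
fun fox :: "(nat fqterm \<Rightarrow> 'a) \<Rightarrow> ('a \<Rightarrow> 'a \<Rightarrow> 'b::ab_group_add) \<Rightarrow> nat \<Rightarrow> nat fqterm \<Rightarrow> ('b \<Rightarrow>\<^sub>0 int)" where
  "fox ev \<theta> j (Gen i) = (if i = j then 1 else 0)"
| "fox ev \<theta> j (Rop s t) = gr (\<theta> (ev s) (ev t)) * fox ev \<theta> j s"
| "fox ev \<theta> j (Rinv s t) = gr (- \<theta> (ev (Rinv s t)) (ev t)) * fox ev \<theta> j s"

definition alex_matrix ::
  "nat \<Rightarrow> (nat fqterm \<times> nat fqterm) list \<Rightarrow> (nat fqterm \<Rightarrow> 'a) \<Rightarrow> ('a \<Rightarrow> 'a \<Rightarrow> 'b::ab_group_add)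
     \<Rightarrow> ('b \<Rightarrow>\<^sub>0 int) mat" where
  "alex_matrix n rs ev \<theta> =
     mat (length rs) n (\<lambda>(i, j). fox ev \<theta> j (fst (rs ! i)) - fox ev \<theta> j (snd (rs ! i)))"

definition ideal_gen :: "'r::comm_ring_1 set \<Rightarrow> 'r set" where
  "ideal_gen S = {x. \<exists>F c. finite F \<and> F \<subseteq> S \<and> x = (\<Sum>s\<in>F. c s * s)}"

definition E0 :: "'r::comm_ring_1 mat \<Rightarrow> 'r set" where
  "E0 M = (if dim_col M \<le> dim_row M
           then ideal_gen {det (submatrix M I {..<dim_col M}) | I. I \<subseteq> {..<dim_row M} \<and> card I = dim_col M}
           else {0})"

end

theory Submission
  imports Defs
begin


fun base :: "'v fqterm \<Rightarrow> 'v" where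
  "base (Gen v) = v"
| "base (Rop s t) = base s"
| "base (Rinv s t) = base s"

lemma wf_Gen[simp]: "wf_term n (Gen v) \<longleftrightarrow> v < n"
  by (auto simp: wf_term_def)
lemma wf_Rop[simp]: "wf_term n (Rop s t) \<longleftrightarrow> wf_term n s \<and> wf_term n t"
  by (auto simp: wf_term_def)
lemma wf_Rinv[simp]: "wf_term n (Rinv s t) \<longleftrightarrow> wf_term n s \<and> wf_term n t"
  by (auto simp: wf_term_def)

lemma wf_base: "wf_term n t \<Longrightarrow> base t < n"
  by (induction t) auto

lemma pcong_wf: "(s, t) \<in> pcong n R \<Longrightarrow> wf_term n s \<and> wf_term n t"
  by (induction rule: pcong.induct) auto

lemma mem_class: "u \<in> pres_class n R t \<longleftrightarrow> (t, u) \<in> pcong n R"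
  by (simp add: pres_class_def)

lemma pcong_class_eq: assumes "(s, t) \<in> pcong n R" shows "pres_class n R s = pres_class n R t"
proof -
  have "(t, s) \<in> pcong n R" using assms by (rule pcong.sym)
  then show ?thesis using assms unfolding pres_class_def
    by (auto intro: pcong.trans)
qed

lemma class_eq_pcong: assumes "wf_term n t" "pres_class n R s = pres_class n R t"
  shows "(s, t) \<in> pcong n R"
proof -
  have "t \<in> pres_class n R t" using assms(1) by (simp add: mem_class pcong.refl)
  then show ?thesis using assms(2) by (metis mem_class)
qed

lemma class_in_car: "wf_term n t \<Longrightarrow> pres_class n R t \<in> pres_car n R"
  unfolding pres_car_def pres_class_def by (rule quotientI) simp

lemma car_cases: assumes "C \<in> pres_car n R" obtains t where "wf_term n t" "C = pres_class n R t"
  using assms unfolding pres_car_def pres_class_def by (auto elim!: quotientE)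

lemma some_in_class: assumes "wf_term n t"
  shows "(SOME c. c \<in> pres_class n R t) \<in> pres_class n R t"
proof -
  have "t \<in> pres_class n R t" using assms by (simp add: mem_class pcong.refl)
  then show ?thesis by (rule someI)
qed

lemma some_class_eq: assumes "wf_term n t"
  shows "pres_class n R (SOME c. c \<in> pres_class n R t) = pres_class n R t"
  and "wf_term n (SOME c. c \<in> pres_class n R t)"
proof -
  have "(t, SOME c. c \<in> pres_class n R t) \<in> pcong n R"
    using some_in_class[OF assms] by (simp add: mem_class)
  then show "pres_class n R (SOME c. c \<in> pres_class n R t) = pres_class n R t"
    "wf_term n (SOME c. c \<in> pres_class n R t)"
    using pcong_class_eq pcong_wf by metis+
qed

lemma pres_op_class: assumes "wf_term n s" "wf_term n t"
  shows "pres_op n R (pres_class n R s) (pres_class n R t) = pres_class n R (Rop s t)"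
proof -
  let ?c = "SOME c. c \<in> pres_class n R s" and ?d = "SOME c. c \<in> pres_class n R t"
  have "(s, ?c) \<in> pcong n R" "(t, ?d) \<in> pcong n R"
    using some_in_class[OF assms(1)] some_in_class[OF assms(2)] by (auto simp: mem_class)
  then have "(Rop ?c ?d, Rop s t) \<in> pcong n R" by (auto intro: pcong.cong_op pcong.sym)
  then show ?thesis unfolding pres_op_def by (rule pcong_class_eq)
qed

fun alpha :: "(nat fqterm \<Rightarrow> 'a) \<Rightarrow> ('a \<Rightarrow> 'a \<Rightarrow> 'b::ab_group_add) \<Rightarrow> nat fqterm \<Rightarrow> 'b" where
  "alpha ev \<theta> (Gen v) = 0"
| "alpha ev \<theta> (Rop s t) = alpha ev \<theta> s + \<theta> (ev s) (ev t)"
| "alpha ev \<theta> (Rinv s t) = alpha ev \<theta> s - \<theta> (ev (Rinv s t)) (ev t)"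

lemma gr_mult: "gr a * gr b = gr (a + b)"
  by (simp add: mult_single)

lemma gr_zero: "gr 0 = 1" by simp

lemma fox_alpha: "fox ev \<theta> j w = (if base w = j then gr (alpha ev \<theta> w) else 0)"
proof (induction w)
  case (Gen x)
  then show ?case by simp
next
  case (Rop w1 w2)
  then show ?case by (simp add: gr_mult add.commute)
next
  case (Rinv w1 w2)
  then show ?case by (simp add: gr_mult add.commute)
qed




definition is_ideal :: "'r::comm_ring_1 set \<Rightarrow> bool" where
  "is_ideal J \<longleftrightarrow> 0 \<in> J \<and> (\<forall>x\<in>J. \<forall>y\<in>J. x + y \<in> J) \<and> (\<forall>r. \<forall>x\<in>J. r * x \<in> J)"

lemma is_ideal_zero: "is_ideal {0}"
  by (auto simp: is_ideal_def)

lemma ideal_gen_base: "s \<in> S \<Longrightarrow> s \<in> ideal_gen S"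
  unfolding ideal_gen_def
  by (rule CollectI, rule exI[of _ "{s}"], rule exI[of _ "\<lambda>_. 1"]) simp

lemma ideal_genE: assumes "x \<in> ideal_gen S"
  obtains F c where "finite F" "F \<subseteq> S" "x = (\<Sum>s\<in>F. c s * s)"
proof -
  have "\<exists>F c. finite F \<and> F \<subseteq> S \<and> x = (\<Sum>s\<in>F. c s * s)"
    using assms unfolding ideal_gen_def by simp
  then show ?thesis using that by blast
qed

lemma ideal_gen_ideal: "is_ideal (ideal_gen S)"
proof -
  have z: "0 \<in> ideal_gen S" unfolding ideal_gen_def
    by (rule CollectI, rule exI[of _ "{}"]) simp
  have a: "x + y \<in> ideal_gen S" if hx: "x \<in> ideal_gen S" and hy: "y \<in> ideal_gen S" for x y
  proof -
    obtain F1 c1 where 1: "finite F1" "F1 \<subseteq> S" "x = (\<Sum>s\<in>F1. c1 s * s)"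
      using hx by (rule ideal_genE)
    obtain F2 c2 where 2: "finite F2" "F2 \<subseteq> S" "y = (\<Sum>s\<in>F2. c2 s * s)"
      using hy by (rule ideal_genE)
    define d1 where "d1 s = (if s \<in> F1 then c1 s else 0)" for s
    define d2 where "d2 s = (if s \<in> F2 then c2 s else 0)" for s
    have x: "x = (\<Sum>s\<in>F1 \<union> F2. d1 s * s)"
      unfolding 1(3) d1_def using 1(1) 2(1)
      by (intro sum.mono_neutral_cong_left) auto
    have y: "y = (\<Sum>s\<in>F1 \<union> F2. d2 s * s)"
      unfolding 2(3) d2_def using 1(1) 2(1)
      by (intro sum.mono_neutral_cong_left) auto
    have "x + y = (\<Sum>s\<in>F1 \<union> F2. (d1 s + d2 s) * s)"
      unfolding x y by (simp add: sum.distrib distrib_right)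
    moreover have "finite (F1 \<union> F2)" "F1 \<union> F2 \<subseteq> S" using 1 2 by auto
    ultimately show ?thesis unfolding ideal_gen_def
      by (intro CollectI exI[of _ "F1 \<union> F2"] exI[of _ "\<lambda>s. d1 s + d2 s"]) simp
  qed
  have m: "r * x \<in> ideal_gen S" if hx: "x \<in> ideal_gen S" for r x
  proof -
    obtain F1 c1 where 1: "finite F1" "F1 \<subseteq> S" "x = (\<Sum>s\<in>F1. c1 s * s)"
      using hx by (rule ideal_genE)
    have "r * x = (\<Sum>s\<in>F1. (r * c1 s) * s)" unfolding 1(3)
      by (simp add: sum_distrib_left mult.assoc)
    then show ?thesis unfolding ideal_gen_def using 1(1,2)
      by (intro CollectI exI[of _ F1] exI[of _ "\<lambda>s. r * c1 s"]) simp
  qed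
  show ?thesis unfolding is_ideal_def using z a m by simp
qed

lemma is_ideal_0: "is_ideal J \<Longrightarrow> 0 \<in> J" unfolding is_ideal_def by blast
lemma is_ideal_add: "is_ideal J \<Longrightarrow> x \<in> J \<Longrightarrow> y \<in> J \<Longrightarrow> x + y \<in> J" unfolding is_ideal_def by blast
lemma is_ideal_mult: "is_ideal J \<Longrightarrow> x \<in> J \<Longrightarrow> r * x \<in> J" unfolding is_ideal_def by blast
lemma is_ideal_mult2: "is_ideal J \<Longrightarrow> x \<in> J \<Longrightarrow> x * r \<in> J"
  using is_ideal_mult[of J x r] by (simp add: mult.commute)
lemma is_ideal_uminus: "is_ideal J \<Longrightarrow> x \<in> J \<Longrightarrow> - x \<in> J"
  using is_ideal_mult[of J x "-1"] by (metis mult_minus1)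
lemma is_ideal_diff: "is_ideal J \<Longrightarrow> x \<in> J \<Longrightarrow> y \<in> J \<Longrightarrow> x - y \<in> J"
  using is_ideal_add[of J x "- y"] is_ideal_uminus[of J y] by (metis diff_conv_add_uminus)
lemma is_ideal_sum: "is_ideal J \<Longrightarrow> (\<And>i. i \<in> A \<Longrightarrow> f i \<in> J) \<Longrightarrow> sum f A \<in> J"
proof (induction A rule: infinite_finite_induct)
  case (infinite A) then show ?case by (simp add: is_ideal_0)
next
  case empty then show ?case by (simp add: is_ideal_0)
next
  case (insert x F) then show ?case by (simp add: is_ideal_add)
qed

lemma ideal_gen_least: assumes "is_ideal J" "S \<subseteq> J" shows "ideal_gen S \<subseteq> J"
proof
  fix x assume "x \<in> ideal_gen S"
  then obtain F c where 1: "finite F" "F \<subseteq> S" "x = (\<Sum>s\<in>F. c s * s)"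
    by (rule ideal_genE)
  have "c s * s \<in> J" if hs: "s \<in> F" for s
  proof -
    have "s \<in> J" using hs 1(2) assms(2) by blast
    then show ?thesis by (rule is_ideal_mult[OF assms(1)])
  qed
  then show "x \<in> J" unfolding 1(3) by (rule is_ideal_sum[OF assms(1)])
qed

lemma E0_ideal: "is_ideal (E0 M)"
proof (cases "dim_col M \<le> dim_row M")
  case True
  show ?thesis unfolding E0_def if_P[OF True] by (rule ideal_gen_ideal)
next
  case False
  show ?thesis unfolding E0_def if_not_P[OF False] by (rule is_ideal_zero)
qed

lemma int_smul_succ: "int_smul (k + 1) a = int_smul k a + a"
proof (cases "0 \<le> k")
  case True
  then have "nat (k + 1) = Suc (nat k)" by simp
  then show ?thesis using True by (simp add: int_smul_def)
next
  case False
  show ?thesis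
  proof (cases "k = -1")
    case True then show ?thesis by (simp add: int_smul_def)
  next
    case False2: False
    then have "nat (- k) = Suc (nat (- (k + 1)))" using False by simp
    then show ?thesis using False False2 by (simp add: int_smul_def)
  qed
qed

lemma int_smul_0[simp]: "int_smul 0 a = 0" by (simp add: int_smul_def)
lemma int_smul_1[simp]: "int_smul 1 a = a" using int_smul_succ[of 0 a] by simp

lemma int_smul_add: "int_smul (k + l) a = int_smul k a + int_smul l a"
proof (induction l rule: int_induct[where k=0])
  case base then show ?case by simp
next
  case (step1 i)
  have "int_smul (k + (i + 1)) a = int_smul ((k + i) + 1) a" by (simp only: add.assoc)
  also have "\<dots> = int_smul (k + i) a + a" by (rule int_smul_succ)
  also have "\<dots> = int_smul k a + (int_smul i a + a)" using step1(2) by (simp only: add.assoc)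
  also have "\<dots> = int_smul k a + int_smul (i + 1) a" by (simp only: int_smul_succ)
  finally show ?case .
next
  case (step2 i)
  have e1: "int_smul (k + i) a = int_smul (k + (i - 1)) a + a"
    using int_smul_succ[of "k + (i - 1)" a] by simp
  have e2: "int_smul i a = int_smul (i - 1) a + a"
    using int_smul_succ[of "i - 1" a] by simp
  from e1 e2 step2(2) have "int_smul (k + (i - 1)) a + a = int_smul k a + (int_smul (i - 1) a + a)"
    by simp
  then show ?case by (simp add: add.assoc[symmetric])
qed

lemma int_smul_minus: "int_smul (- k) a = - int_smul k a"
  using int_smul_add[of k "-k" a] by (simp add: eq_neg_iff_add_eq_0 add.commute)

definition glin :: "('x \<Rightarrow> 'b::ab_group_add) \<Rightarrow> ('x \<Rightarrow>\<^sub>0 int) \<Rightarrow> 'b" where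
  "glin f c = (\<Sum>k\<in>Poly_Mapping.keys c. int_smul (Poly_Mapping.lookup c k) (f k))"

lemma glin_superset: assumes "finite K" "Poly_Mapping.keys c \<subseteq> K"
  shows "glin f c = (\<Sum>k\<in>K. int_smul (Poly_Mapping.lookup c k) (f k))"
  unfolding glin_def using assms
  by (intro sum.mono_neutral_left) (auto simp: in_keys_iff)

lemma glin_0[simp]: "glin f 0 = 0" by (simp add: glin_def)
lemma glin_of[simp]: "glin f (frag_of x) = f x" by (simp add: glin_def keys_frag_of)

lemma glin_add: "glin f (a + b) = glin f a + glin f b"
proof -
  let ?K = "Poly_Mapping.keys a \<union> Poly_Mapping.keys b"
  have fin: "finite ?K" by simp
  have "Poly_Mapping.keys (a + b) \<subseteq> ?K" by (rule keys_add)
  then have "glin f (a + b) = (\<Sum>k\<in>?K. int_smul (Poly_Mapping.lookup (a + b) k) (f k))"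
    by (rule glin_superset[OF fin])
  also have "\<dots> = (\<Sum>k\<in>?K. int_smul (Poly_Mapping.lookup a k) (f k)) + (\<Sum>k\<in>?K. int_smul (Poly_Mapping.lookup b k) (f k))"
    by (simp add: lookup_add int_smul_add sum.distrib)
  also have "\<dots> = glin f a + glin f b"
    using glin_superset[OF fin, of a f] glin_superset[OF fin, of b f] by simp
  finally show ?thesis .
qed

lemma glin_minus: "glin f (- a) = - glin f a"
proof -
  have "glin f (- a + a) = glin f (- a) + glin f a" by (rule glin_add)
  then have "glin f (- a) + glin f a = 0" by simp
  then show ?thesis by (subst eq_neg_iff_add_eq_0)
qed

lemma glin_diff: "glin f (a - b) = glin f a - glin f b"
proof -
  have "a - b = a + (- b)" by simp
  then have "glin f (a - b) = glin f a + glin f (- b)" using glin_add by metis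
  then show ?thesis by (simp add: glin_minus)
qed

lemma cocycle_lin_glin: "cocycle_lin \<theta> z = glin (\<lambda>p. \<theta> (fst p) (snd p)) z"
  by (simp add: cocycle_lin_def glin_def)

lemma glin_compose: assumes "Poly_Mapping.keys c \<subseteq> S"
  shows "glin f (frag_extend (\<lambda>x. frag_of (g x)) c) = glin (\<lambda>x. f (g x)) c"
  using assms
proof (induction c rule: frag_induction)
  case zero then show ?case by simp
next
  case (one x) then show ?case by simp
next
  case (diff a b) then show ?case by (simp add: frag_extend_diff glin_diff)
qed




lemma chains_iff: "c \<in> chains S \<longleftrightarrow> Poly_Mapping.keys c \<subseteq> S"
  by (simp add: chains_def)
lemma chains_0[simp]: "0 \<in> chains S" by (simp add: chains_iff)
lemma chains_of: "x \<in> S \<Longrightarrow> frag_of x \<in> chains S" by (simp add: chains_iff keys_frag_of)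
lemma chains_add: "a \<in> chains S \<Longrightarrow> b \<in> chains S \<Longrightarrow> a + b \<in> chains S"
  using keys_add[of a b] unfolding chains_iff by (meson Un_least order_trans)
lemma chains_diff: "a \<in> chains S \<Longrightarrow> b \<in> chains S \<Longrightarrow> a - b \<in> chains S"
  using keys_diff[of a b] unfolding chains_iff by (meson Un_least order_trans)
lemma chains_minus: "a \<in> chains S \<Longrightarrow> - a \<in> chains S"
  unfolding chains_iff by simp

lemma bd2_of: "bd2 op (frag_of (x, y)) = frag_of x - frag_of (op x y)"
  by (simp add: bd2_def)
lemma bd2_diff: "bd2 op (a - b) = bd2 op a - bd2 op b"
  by (simp add: bd2_def frag_extend_diff)
lemma bd2_add: "bd2 op (a + b) = bd2 op a + bd2 op b"
  by (simp add: bd2_def frag_extend_add)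
lemma bd2_0[simp]: "bd2 op 0 = 0"
  by (simp add: bd2_def)
lemma bd3_of: "bd3 op (frag_of (x, y, z)) =
   (frag_of (x, z) - frag_of (op x y, z)) - (frag_of (x, y) - frag_of (op x z, op y z))"
  by (simp add: bd3_def)
lemma bd3_diff: "bd3 op (a - b) = bd3 op a - bd3 op b"
  by (simp add: bd3_def frag_extend_diff)

lemma cocycle_lin_of: "cocycle_lin \<phi> (frag_of (x, y)) = \<phi> x y"
  by (simp add: cocycle_lin_glin)
lemma cocycle_lin_diff: "cocycle_lin \<phi> (a - b) = cocycle_lin \<phi> a - cocycle_lin \<phi> b"
  by (simp add: cocycle_lin_glin glin_diff)
lemma cocycle_lin_add: "cocycle_lin \<phi> (a + b) = cocycle_lin \<phi> a + cocycle_lin \<phi> b"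
  by (simp add: cocycle_lin_glin glin_add)
lemma cocycle_lin_0[simp]: "cocycle_lin \<phi> 0 = 0"
  by (simp add: cocycle_lin_glin)

lemma cocycle_bd3: assumes "quandle_2cocycle Y op \<phi>" "d \<in> chains (Y \<times> Y \<times> Y)"
  shows "cocycle_lin \<phi> (bd3 op d) = 0"
proof -
  have "Poly_Mapping.keys d \<subseteq> Y \<times> Y \<times> Y" using assms(2) by (simp add: chains_def)
  then show ?thesis
  proof (induction d rule: frag_induction)
    case zero then show ?case by (simp add: bd3_def)
  next
    case (one p)
    then obtain x y z where p: "p = (x, y, z)" "x \<in> Y" "y \<in> Y" "z \<in> Y" by auto
    have c: "\<phi> x y + \<phi> (op x y) z = \<phi> x z + \<phi> (op x z) (op y z)"
      using assms(1) p unfolding quandle_2cocycle_def by blast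
    have "cocycle_lin \<phi> (bd3 op (frag_of p)) =
      (\<phi> x z - \<phi> (op x y) z) - (\<phi> x y - \<phi> (op x z) (op y z))"
      unfolding p bd3_of by (simp add: cocycle_lin_diff cocycle_lin_of)
    also have "\<dots> = 0" using c by (simp add: algebra_simps)
    finally show ?case .
  next
    case (diff a b) then show ?case by (simp add: bd3_diff cocycle_lin_diff)
  qed
qed

lemma cocycle_degen: assumes "quandle_2cocycle Y op \<phi>" "e \<in> degen2 Y"
  shows "cocycle_lin \<phi> e = 0"
proof -
  have "Poly_Mapping.keys e \<subseteq> {(x, x) | x. x \<in> Y}" using assms(2) by (simp add: degen2_def chains_def)
  then show ?thesis
  proof (induction e rule: frag_induction)
    case zero then show ?case by simp
  next
    case (one p)
    then obtain x where p: "p = (x, x)" "x \<in> Y" by auto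
    then show ?case using assms(1) unfolding quandle_2cocycle_def by (simp add: cocycle_lin_of)
  next
    case (diff a b) then show ?case by (simp add: cocycle_lin_diff)
  qed
qed

lemma cocycle_B2: assumes "quandle_2cocycle Y op \<phi>" "k \<in> B2 Y op"
  shows "cocycle_lin \<phi> k = 0"
proof -
  obtain d e where k: "k = bd3 op d + e" "d \<in> chains (Y \<times> Y \<times> Y)" "e \<in> degen2 Y"
    using assms(2) unfolding B2_def by blast
  show ?thesis unfolding k(1) cocycle_lin_add
    using cocycle_bd3[OF assms(1) k(2)] cocycle_degen[OF assms(1) k(3)] by simp
qed

lemma bd2_bd3: assumes "quandle Y op" "d \<in> chains (Y \<times> Y \<times> Y)"
  shows "bd2 op (bd3 op d) = 0"
proof -
  have "Poly_Mapping.keys d \<subseteq> Y \<times> Y \<times> Y" using assms(2) by (simp add: chains_def)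
  then show ?thesis
  proof (induction d rule: frag_induction)
    case zero then show ?case by (simp add: bd3_def)
  next
    case (one p)
    then obtain x y z where p: "p = (x, y, z)" "x \<in> Y" "y \<in> Y" "z \<in> Y" by auto
    have c: "op (op x y) z = op (op x z) (op y z)"
      using assms(1) p unfolding quandle_def by blast
    show ?case unfolding p bd3_of bd2_diff bd2_of c by simp
  next
    case (diff a b) then show ?case by (simp add: bd3_diff bd2_diff)
  qed
qed

lemma bd2_degen: assumes "quandle Y op" "e \<in> degen2 Y"
  shows "bd2 op e = 0"
proof -
  have "Poly_Mapping.keys e \<subseteq> {(x, x) | x. x \<in> Y}" using assms(2) by (simp add: degen2_def chains_def)
  then show ?thesis
  proof (induction e rule: frag_induction)
    case zero then show ?case by simp
  next
    case (one p)
    then obtain x where p: "p = (x, x)" "x \<in> Y" by auto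
    then have "op x x = x" using assms(1) unfolding quandle_def by blast
    then show ?case using p by (simp add: bd2_of)
  next
    case (diff a b) then show ?case by (simp add: bd2_diff)
  qed
qed

lemma bd2_B2: assumes "quandle Y op" "k \<in> B2 Y op" shows "bd2 op k = 0"
proof -
  obtain d e where k: "k = bd3 op d + e" "d \<in> chains (Y \<times> Y \<times> Y)" "e \<in> degen2 Y"
    using assms(2) unfolding B2_def by blast
  show ?thesis unfolding k(1) bd2_add
    using bd2_bd3[OF assms(1) k(2)] bd2_degen[OF assms(1) k(3)] by simp
qed

lemma B2_chains: assumes "\<forall>x\<in>Y. \<forall>y\<in>Y. op x y \<in> Y" "k \<in> B2 Y op" shows "k \<in> chains (Y \<times> Y)"
proof -
  obtain d e where k: "k = bd3 op d + e" "d \<in> chains (Y \<times> Y \<times> Y)" "e \<in> degen2 Y"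
    using assms(2) unfolding B2_def by blast
  have "Poly_Mapping.keys d \<subseteq> Y \<times> Y \<times> Y" using k(2) by (simp add: chains_def)
  then have "bd3 op d \<in> chains (Y \<times> Y)"
  proof (induction d rule: frag_induction)
    case zero then show ?case by (simp add: bd3_def)
  next
    case (one p)
    then obtain x y z where p: "p = (x, y, z)" "x \<in> Y" "y \<in> Y" "z \<in> Y" by auto
    have "op x y \<in> Y" "op x z \<in> Y" "op y z \<in> Y" using assms(1) p by auto
    then show ?case unfolding p bd3_of using p
      by (intro chains_diff chains_of) auto
  next
    case (diff a b) then show ?case by (simp add: bd3_diff chains_diff)
  qed
  moreover have "e \<in> chains (Y \<times> Y)" using k(3) unfolding degen2_def chains_def by auto
  ultimately show ?thesis unfolding k(1) by (rule chains_add)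
qed

lemma zero_B2: "0 \<in> B2 Y op"
  unfolding B2_def degen2_def
  by (rule CollectI, rule exI[of _ 0], rule exI[of _ 0]) (simp add: bd3_def)

definition pushf :: "('a \<Rightarrow> 'c) \<Rightarrow> ('a \<times> 'a \<Rightarrow>\<^sub>0 int) \<Rightarrow> ('c \<times> 'c \<Rightarrow>\<^sub>0 int)" where
  "pushf f = frag_extend (\<lambda>(x, y). frag_of (f x, f y))"

lemma pushf_cocycle: assumes "Poly_Mapping.keys c \<subseteq> S"
  shows "cocycle_lin \<theta> (pushf f c) = cocycle_lin (\<lambda>x y. \<theta> (f x) (f y)) c"
proof -
  have e: "(\<lambda>(x, y). frag_of (f x, f y)) = (\<lambda>p. frag_of ((\<lambda>p. (f (fst p), f (snd p))) p))"
    by (auto simp: fun_eq_iff)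
  show ?thesis unfolding pushf_def e cocycle_lin_glin
    using glin_compose[OF assms, of "\<lambda>p. \<theta> (fst p) (snd p)" "\<lambda>p. (f (fst p), f (snd p))"] by simp
qed

lemma hom_cocycle: assumes "quandle_hom Y opY X opX f" "quandle_2cocycle X opX \<theta>"
  shows "quandle_2cocycle Y opY (\<lambda>x y. \<theta> (f x) (f y))"
  using assms unfolding quandle_hom_def quandle_2cocycle_def by simp

lemma value_hclass:
  assumes hom: "quandle_hom Y opY X opX f" and coc: "quandle_2cocycle X opX \<theta>"
    and z: "z \<in> chains (Y \<times> Y)"
  shows "cocycle_H2 \<theta> (induced_H2 X opX f (hclass Y opY z)) = cocycle_lin (\<lambda>x y. \<theta> (f x) (f y)) z"
proof -
  have ne: "z + 0 \<in> hclass Y opY z" unfolding hclass_def using zero_B2 by blast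
  define z0 where "z0 = (SOME w. w \<in> hclass Y opY z)"
  have "z0 \<in> hclass Y opY z" unfolding z0_def using ne by (rule someI)
  then obtain k where k: "z0 = z + k" "k \<in> B2 Y opY" unfolding hclass_def by blast
  have ne2: "pushf f z0 + 0 \<in> hclass X opX (pushf f z0)" unfolding hclass_def using zero_B2 by blast
  define w1 where "w1 = (SOME w. w \<in> hclass X opX (pushf f z0))"
  have "w1 \<in> hclass X opX (pushf f z0)" unfolding w1_def using ne2 by (rule someI)
  then obtain k' where k': "w1 = pushf f z0 + k'" "k' \<in> B2 X opX" unfolding hclass_def by blast
  have cY: "quandle_2cocycle Y opY (\<lambda>x y. \<theta> (f x) (f y))" by (rule hom_cocycle[OF hom coc])
  have "cocycle_H2 \<theta> (induced_H2 X opX f (hclass Y opY z)) = cocycle_lin \<theta> w1"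
    unfolding cocycle_H2_def induced_H2_def w1_def z0_def pushf_def by simp
  also have "\<dots> = cocycle_lin \<theta> (pushf f z0)"
    unfolding k'(1) cocycle_lin_add cocycle_B2[OF coc k'(2)] by simp
  also have "\<dots> = cocycle_lin (\<lambda>x y. \<theta> (f x) (f y)) z0"
    by (rule pushf_cocycle[OF subset_refl])
  also have "\<dots> = cocycle_lin (\<lambda>x y. \<theta> (f x) (f y)) z"
    unfolding k(1) cocycle_lin_add cocycle_B2[OF cY k(2)] by simp
  finally show ?thesis .
qed

lemma image_H2:
  assumes hom: "quandle_hom Y opY X opX f" and coc: "quandle_2cocycle X opX \<theta>"
    and qY: "quandle Y opY"
  shows "(\<lambda>h. cocycle_H2 \<theta> (induced_H2 X opX f h)) ` H2Q Y opY =
    {cocycle_lin (\<lambda>x y. \<theta> (f x) (f y)) z | z. z \<in> chains (Y \<times> Y) \<and> bd2 opY z = 0}"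
    (is "?L = ?R")
proof
  show "?L \<subseteq> ?R"
  proof
    fix a assume "a \<in> ?L"
    then obtain z where z: "z \<in> chains (Y \<times> Y)" "bd2 opY z = 0"
      "a = cocycle_H2 \<theta> (induced_H2 X opX f (hclass Y opY z))"
      unfolding H2Q_def by blast
    then show "a \<in> ?R" using value_hclass[OF hom coc z(1)] by blast
  qed
  show "?R \<subseteq> ?L"
  proof
    fix a assume "a \<in> ?R"
    then obtain z where z: "z \<in> chains (Y \<times> Y)" "bd2 opY z = 0"
      "a = cocycle_lin (\<lambda>x y. \<theta> (f x) (f y)) z" by blast
    then have "hclass Y opY z \<in> H2Q Y opY" unfolding H2Q_def by blast
    moreover have "a = cocycle_H2 \<theta> (induced_H2 X opX f (hclass Y opY z))"
      using value_hclass[OF hom coc z(1)] z(3) by simp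
    ultimately show "a \<in> ?L" by blast
  qed
qed




definition subgrp :: "'b::ab_group_add set \<Rightarrow> bool" where
  "subgrp W \<longleftrightarrow> 0 \<in> W \<and> (\<forall>a\<in>W. \<forall>b\<in>W. a + b \<in> W) \<and> (\<forall>a\<in>W. - a \<in> W)"

lemma subgrp_0: "subgrp W \<Longrightarrow> 0 \<in> W" unfolding subgrp_def by blast
lemma subgrp_add: "subgrp W \<Longrightarrow> a \<in> W \<Longrightarrow> b \<in> W \<Longrightarrow> a + b \<in> W" unfolding subgrp_def by blast
lemma subgrp_uminus: "subgrp W \<Longrightarrow> a \<in> W \<Longrightarrow> - a \<in> W" unfolding subgrp_def by blast
lemma subgrp_diff: "subgrp W \<Longrightarrow> a \<in> W \<Longrightarrow> b \<in> W \<Longrightarrow> a - b \<in> W"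
  using subgrp_add[of W a "- b"] subgrp_uminus[of W b] by (metis diff_conv_add_uminus)

fun chn :: "(nat fqterm \<Rightarrow> 'q) \<Rightarrow> nat fqterm \<Rightarrow> ('q \<times> 'q \<Rightarrow>\<^sub>0 int)" where
  "chn cl (Gen v) = 0"
| "chn cl (Rop s t) = chn cl s + frag_of (cl s, cl t)"
| "chn cl (Rinv s t) = chn cl s - frag_of (cl (Rinv s t), cl t)"

locale presctx =
  fixes n :: nat and rs :: "(nat fqterm \<times> nat fqterm) list"
    and X :: "'a set" and opX :: "'a \<Rightarrow> 'a \<Rightarrow> 'a"
    and \<theta> :: "'a \<Rightarrow> 'a \<Rightarrow> 'b::ab_group_add"
    and \<rho> :: "nat fqterm set \<Rightarrow> 'a"
  assumes n_pos: "0 < n"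
    and rs_wf: "\<forall>(s, t) \<in> set rs. wf_term n s \<and> wf_term n t"
    and conn: "quandle_connected (pres_car n (set rs)) (pres_op n (set rs))"
    and qX: "quandle X opX"
    and coc: "quandle_2cocycle X opX \<theta>"
    and hom: "quandle_hom (pres_car n (set rs)) (pres_op n (set rs)) X opX \<rho>"
begin

abbreviation "R \<equiv> set rs"
abbreviation "Q \<equiv> pres_car n (set rs)"
abbreviation "opQ \<equiv> pres_op n (set rs)"
abbreviation "cls \<equiv> pres_class n (set rs)"
abbreviation "m \<equiv> length rs"
definition ev :: "nat fqterm \<Rightarrow> 'a" where "ev t = \<rho> (cls t)"
abbreviation "al \<equiv> alpha ev \<theta>"
definition w1 :: "nat \<Rightarrow> nat fqterm" where "w1 i = fst (rs ! i)"
definition w2 :: "nat \<Rightarrow> nat fqterm" where "w2 i = snd (rs ! i)"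
definition src :: "nat \<Rightarrow> nat" where "src i = base (w1 i)"
definition tgt :: "nat \<Rightarrow> nat" where "tgt i = base (w2 i)"
definition defect :: "(nat \<Rightarrow> 'b) \<Rightarrow> nat \<Rightarrow> 'b" where
  "defect p i = al (w1 i) + p (src i) - al (w2 i) - p (tgt i)"
definition phi :: "nat fqterm set \<Rightarrow> nat fqterm set \<Rightarrow> 'b" where
  "phi x y = \<theta> (\<rho> x) (\<rho> y)"

lemma qQ: "quandle Q opQ" using conn unfolding quandle_connected_def by blast

lemma cls_in: "wf_term n t \<Longrightarrow> cls t \<in> Q" by (rule class_in_car)

lemma ev_in: "wf_term n t \<Longrightarrow> ev t \<in> X"
  using hom cls_in unfolding quandle_hom_def ev_def by blast

lemma ev_Rop: assumes "wf_term n s" "wf_term n t" shows "ev (Rop s t) = opX (ev s) (ev t)"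
proof -
  have "ev (Rop s t) = \<rho> (opQ (cls s) (cls t))" unfolding ev_def pres_op_class[OF assms] ..
  also have "\<dots> = opX (\<rho> (cls s)) (\<rho> (cls t))"
    using hom cls_in assms unfolding quandle_hom_def by blast
  finally show ?thesis unfolding ev_def .
qed

lemma pcong_ev: "(s, t) \<in> pcong n R \<Longrightarrow> ev s = ev t"
  unfolding ev_def using pcong_class_eq by metis

lemma rel_props: assumes "i < m"
  shows "wf_term n (w1 i)" "wf_term n (w2 i)" "(w1 i, w2 i) \<in> pcong n R"
    "cls (w1 i) = cls (w2 i)" "src i < n" "tgt i < n"
proof -
  have mem: "(w1 i, w2 i) \<in> R" using assms unfolding w1_def w2_def by simp
  then show w: "wf_term n (w1 i)" "wf_term n (w2 i)" using rs_wf by auto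
  show p: "(w1 i, w2 i) \<in> pcong n R" using mem w by (rule pcong.rel)
  show "cls (w1 i) = cls (w2 i)" using p by (rule pcong_class_eq)
  show "src i < n" "tgt i < n" unfolding src_def tgt_def using w wf_base by auto
qed

lemma phi_cocycle: "quandle_2cocycle Q opQ phi"
  unfolding phi_def by (rule hom_cocycle[OF hom coc])

lemma phi_cls: "phi (cls s) (cls t) = \<theta> (ev s) (ev t)"
  by (simp add: phi_def ev_def)

section \<open>The lambda argument\<close>

definition L :: "(nat \<Rightarrow> 'b) \<Rightarrow> nat fqterm \<Rightarrow> 'b" where
  "L p t = p (base t) + al t"

lemma lambda_pcong:
  assumes W: "subgrp W" and D: "\<forall>i<m. defect p i \<in> W"
    and st: "(s, t) \<in> pcong n R"
  shows "L p s - L p t \<in> W"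
  using st
proof (induction rule: pcong.induct)
  case (refl t) then show ?case using subgrp_0[OF W] by simp
next
  case (sym s t)
  have "L p t - L p s = - (L p s - L p t)" by simp
  then show ?case using subgrp_uminus[OF W sym.IH] by simp
next
  case (trans s t u)
  have "L p s - L p u = (L p s - L p t) + (L p t - L p u)" by simp
  then show ?case using subgrp_add[OF W trans.IH] by simp
next
  case (rel s t)
  then obtain i where i: "i < m" "rs ! i = (s, t)" by (metis in_set_conv_nth)
  have "L p s - L p t = defect p i"
    using i unfolding L_def defect_def w1_def w2_def src_def tgt_def by (simp add: algebra_simps)
  then show ?case using D i by simp
next
  case (cong_op a b c d)
  have "ev a = ev b" "ev c = ev d" using cong_op.hyps pcong_ev by auto
  then have "L p (Rop a c) - L p (Rop b d) = L p a - L p b"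
    unfolding L_def by simp
  then show ?case using cong_op.IH by simp
next
  case (cong_inv a b c d)
  have "ev (Rinv a c) = ev (Rinv b d)" "ev c = ev d"
    using pcong.cong_inv[OF cong_inv.hyps] cong_inv.hyps pcong_ev by auto
  then have "L p (Rinv a c) - L p (Rinv b d) = L p a - L p b"
    unfolding L_def by simp
  then show ?case using cong_inv.IH by simp
next
  case (idem a)
  have "\<theta> (ev a) (ev a) = 0" using coc ev_in[OF idem] unfolding quandle_2cocycle_def by blast
  then have "L p (Rop a a) - L p a = 0" unfolding L_def by simp
  then show ?case using subgrp_0[OF W] by simp
next
  case (inv_op a b)
  have "L p (Rop (Rinv a b) b) - L p a = 0" unfolding L_def by simp
  then show ?case using subgrp_0[OF W] by simp
next
  case (op_inv a b)
  have "ev (Rinv (Rop a b) b) = ev a" using pcong_ev[OF pcong.op_inv[OF op_inv]] .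
  then have "L p (Rinv (Rop a b) b) - L p a = 0" unfolding L_def by simp
  then show ?case using subgrp_0[OF W] by simp
next
  case (dist a b c)
  have e: "ev (Rop a b) = opX (ev a) (ev b)" "ev (Rop a c) = opX (ev a) (ev c)"
    "ev (Rop b c) = opX (ev b) (ev c)" using dist ev_Rop by auto
  have "\<theta> (ev a) (ev b) + \<theta> (opX (ev a) (ev b)) (ev c) = \<theta> (ev a) (ev c) + \<theta> (opX (ev a) (ev c)) (opX (ev b) (ev c))"
    using coc ev_in dist unfolding quandle_2cocycle_def by blast
  then have "L p (Rop (Rop a b) c) - L p (Rop (Rop a c) (Rop b c)) = 0"
    unfolding L_def using e by (simp add: algebra_simps)
  then show ?case using subgrp_0[OF W] by simp
qed

definition Lam :: "(nat \<Rightarrow> 'b) \<Rightarrow> nat fqterm set \<Rightarrow> 'b" where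
  "Lam p C = L p (SOME t. t \<in> C)"

lemma Lam_step:
  assumes W: "subgrp W" and D: "\<forall>i<m. defect p i \<in> W"
    and x: "x \<in> Q" and y: "y \<in> Q"
  shows "phi x y + Lam p x - Lam p (opQ x y) \<in> W"
proof -
  obtain tx where tx: "wf_term n tx" "x = cls tx" using x by (rule car_cases)
  obtain ty where ty: "wf_term n ty" "y = cls ty" using y by (rule car_cases)
  define sx where "sx = (SOME t. t \<in> x)"
  define sy where "sy = (SOME t. t \<in> y)"
  have sx: "wf_term n sx" "cls sx = x" unfolding sx_def tx(2) using some_class_eq[OF tx(1)] by auto
  have sy: "wf_term n sy" "cls sy = y" unfolding sy_def ty(2) using some_class_eq[OF ty(1)] by auto
  have o: "opQ x y = cls (Rop sx sy)" using pres_op_class[OF sx(1) sy(1), of R] sx(2) sy(2) by simp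
  define s' where "s' = (SOME t. t \<in> cls (Rop sx sy))"
  have "s' \<in> cls (Rop sx sy)" unfolding s'_def using some_in_class sx(1) sy(1) by simp
  then have "(Rop sx sy, s') \<in> pcong n R" by (simp add: mem_class)
  then have "L p (Rop sx sy) - L p s' \<in> W" by (rule lambda_pcong[OF W D])
  moreover have "L p (Rop sx sy) = Lam p x + phi x y"
    unfolding L_def Lam_def sx_def[symmetric] using phi_cls[of sx sy] sx(2) sy(2)
    by (simp add: L_def)
  moreover have "Lam p (opQ x y) = L p s'" unfolding Lam_def o s'_def ..
  ultimately show ?thesis by (simp add: algebra_simps)
qed

lemma cycle_in_W:
  assumes W: "subgrp W" and D: "\<forall>i<m. defect p i \<in> W"
    and z: "z \<in> chains (Q \<times> Q)" and bz: "bd2 opQ z = 0"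
  shows "cocycle_lin phi z \<in> W"
proof -
  have "Poly_Mapping.keys z \<subseteq> Q \<times> Q" using z by (simp add: chains_iff)
  then have "cocycle_lin phi z + glin (Lam p) (bd2 opQ z) \<in> W"
  proof (induction z rule: frag_induction)
    case zero then show ?case using subgrp_0[OF W] by simp
  next
    case (one q)
    then obtain x y where q: "q = (x, y)" "x \<in> Q" "y \<in> Q" by auto
    have "cocycle_lin phi (frag_of q) + glin (Lam p) (bd2 opQ (frag_of q)) = phi x y + Lam p x - Lam p (opQ x y)"
      unfolding q bd2_of glin_diff cocycle_lin_of by simp
    then show ?case using Lam_step[OF W D q(2,3)] by simp
  next
    case (diff a b)
    have "cocycle_lin phi (a - b) + glin (Lam p) (bd2 opQ (a - b)) =
      (cocycle_lin phi a + glin (Lam p) (bd2 opQ a)) - (cocycle_lin phi b + glin (Lam p) (bd2 opQ b))"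
      unfolding cocycle_lin_diff bd2_diff glin_diff by (simp add: algebra_simps)
    then show ?case using subgrp_diff[OF W diff.IH] by simp
  qed
  then show ?thesis using bz by simp
qed

end



context presctx begin

lemma chn_chains: "wf_term n w \<Longrightarrow> chn cls w \<in> chains (Q \<times> Q)"
proof (induction w)
  case (Gen v) then show ?case by simp
next
  case (Rop s t)
  then show ?case using cls_in by (auto intro!: chains_add chains_of)
next
  case (Rinv s t)
  then show ?case using cls_in[of "Rinv s t"] cls_in[of t] by (auto intro!: chains_diff chains_of)
qed

lemma chn_bd2: "wf_term n w \<Longrightarrow> bd2 opQ (chn cls w) = frag_of (cls (Gen (base w))) - frag_of (cls w)"
proof (induction w)
  case (Gen v) then show ?case by simp
next
  case (Rop s t)
  have ws: "wf_term n s" "wf_term n t" using Rop.prems by auto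
  have "opQ (cls s) (cls t) = cls (Rop s t)" by (rule pres_op_class[OF ws])
  then show ?case using Rop.IH(1)[OF ws(1)] by (simp add: bd2_add bd2_of)
next
  case (Rinv s t)
  have ws: "wf_term n s" "wf_term n t" using Rinv.prems by auto
  have wi: "wf_term n (Rinv s t)" using ws by simp
  have "opQ (cls (Rinv s t)) (cls t) = cls (Rop (Rinv s t) t)" by (rule pres_op_class[OF wi ws(2)])
  also have "\<dots> = cls s" by (rule pcong_class_eq[OF pcong.inv_op[OF ws]])
  finally have e: "opQ (cls (Rinv s t)) (cls t) = cls s" .
  show ?case using Rinv.IH(1)[OF ws(1)] by (simp add: bd2_diff bd2_of e)
qed

lemma chn_val: "cocycle_lin phi (chn cls w) = al w"
proof (induction w)
  case (Gen v) then show ?case by simp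
next
  case (Rop s t)
  then show ?case by (simp add: cocycle_lin_add cocycle_lin_of phi_cls)
next
  case (Rinv s t)
  then show ?case by (simp add: cocycle_lin_diff cocycle_lin_of phi_cls)
qed

section \<open>Connectivity of the relator graph\<close>

definition E :: "(nat \<times> nat) set" where
  "E = {(src i, tgt i) | i. i < m} \<union> {(tgt i, src i) | i. i < m}"

lemma E_sym: "(a, b) \<in> E\<^sup>* \<Longrightarrow> (b, a) \<in> E\<^sup>*"
proof (induction rule: rtrancl_induct)
  case base then show ?case by simp
next
  case (step y z)
  have "(z, y) \<in> E" using step(2) unfolding E_def by blast
  then show ?case using step(3) by (meson converse_rtrancl_into_rtrancl)
qed

lemma pcong_base: "(s, t) \<in> pcong n R \<Longrightarrow> (base s, base t) \<in> E\<^sup>*"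
proof (induction rule: pcong.induct)
  case (sym s t) then show ?case using E_sym by blast
next
  case (trans s t u) then show ?case by (meson rtrancl_trans)
next
  case (rel s t)
  then obtain i where i: "i < m" "rs ! i = (s, t)" by (metis in_set_conv_nth)
  then have "(src i, tgt i) \<in> E" unfolding E_def by blast
  then show ?case using i unfolding src_def tgt_def w1_def w2_def by auto
qed auto

lemma connected_graph: assumes "w < n" shows "(0, w) \<in> E\<^sup>*"
proof -
  define ok where "ok C \<longleftrightarrow> (\<forall>t\<in>C. (0, base t) \<in> E\<^sup>*)" for C
  have ok_cls: "ok (cls t) \<longleftrightarrow> (0, base t) \<in> E\<^sup>*" if "wf_term n t" for t
  proof
    assume "ok (cls t)"
    moreover have "t \<in> cls t" using that by (simp add: mem_class pcong.refl)
    ultimately show "(0, base t) \<in> E\<^sup>*" unfolding ok_def by blast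
  next
    assume a: "(0, base t) \<in> E\<^sup>*"
    show "ok (cls t)" unfolding ok_def
    proof
      fix u assume "u \<in> cls t"
      then have "(base t, base u) \<in> E\<^sup>*" by (simp add: mem_class pcong_base)
      then show "(0, base u) \<in> E\<^sup>*" using a by (meson rtrancl_trans)
    qed
  qed
  let ?S = "{(a, opQ a z) | a z. a \<in> Q \<and> z \<in> Q} \<union> {(a, qinv Q opQ a z) | a z. a \<in> Q \<and> z \<in> Q}"
  have g0: "cls (Gen 0) \<in> Q" "cls (Gen w) \<in> Q" using n_pos assms by (auto intro: cls_in)
  have path: "(cls (Gen 0), cls (Gen w)) \<in> ?S\<^sup>*"
    using conn g0 unfolding quandle_connected_def by blast
  have qQ': "\<forall>y\<in>Q. bij_betw (\<lambda>z. opQ z y) Q Q" using qQ unfolding quandle_def by blast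
  have "ok y \<and> y \<in> Q" if "(cls (Gen 0), y) \<in> ?S\<^sup>*" for y
    using that
  proof (induction rule: rtrancl_induct)
    case base then show ?case using ok_cls[of "Gen 0"] n_pos g0 by simp
  next
    case (step y y')
    then have oky: "ok y" "y \<in> Q" by auto
    from step(2) show ?case
    proof (elim UnE)
      assume "(y, y') \<in> {(a, opQ a z) | a z. a \<in> Q \<and> z \<in> Q}"
      then obtain z where z: "y' = opQ y z" "z \<in> Q" by blast
      obtain ty where ty: "wf_term n ty" "y = cls ty" using oky(2) by (rule car_cases)
      obtain tz where tz: "wf_term n tz" "z = cls tz" using z(2) by (rule car_cases)
      have y': "y' = cls (Rop ty tz)" using z(1) ty tz pres_op_class by metis
      have "(0, base ty) \<in> E\<^sup>*" using oky(1) ok_cls ty by blast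
      then show ?thesis using y' ok_cls[of "Rop ty tz"] ty tz cls_in by simp
    next
      assume "(y, y') \<in> {(a, qinv Q opQ a z) | a z. a \<in> Q \<and> z \<in> Q}"
      then obtain z where z: "y' = qinv Q opQ y z" "z \<in> Q" by blast
      have b: "bij_betw (\<lambda>u. opQ u z) Q Q" using qQ' z(2) by blast
      have y'Q: "y' \<in> Q" unfolding z(1) qinv_def
        by (metis b bij_betw_def inv_into_into oky(2))
      have yy: "opQ y' z = y" unfolding z(1) qinv_def
        by (metis b bij_betw_def f_inv_into_f oky(2))
      obtain ty where ty: "wf_term n ty" "y' = cls ty" using y'Q by (rule car_cases)
      obtain tz where tz: "wf_term n tz" "z = cls tz" using z(2) by (rule car_cases)
      have "y = cls (Rop ty tz)" using yy ty tz pres_op_class by metis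
      then have "(0, base ty) \<in> E\<^sup>*" using oky(1) ok_cls[of "Rop ty tz"] ty tz by simp
      then show ?thesis using ok_cls ty y'Q by simp
    qed
  qed
  then have "ok (cls (Gen w))" using path by blast
  then show ?thesis using ok_cls[of "Gen w"] assms by simp
qed

lemma crossing:
  assumes "(a, b) \<in> E\<^sup>*" "a \<in> S" "b \<notin> S"
  shows "\<exists>i<m. (src i \<in> S \<and> tgt i \<notin> S) \<or> (tgt i \<in> S \<and> src i \<notin> S)"
  using assms
proof (induction arbitrary: rule: rtrancl_induct)
  case base then show ?case by simp
next
  case (step y z)
  show ?case
  proof (cases "y \<in> S")
    case True
    then show ?thesis using step(2) step.prems(2) unfolding E_def by blast
  next
    case False
    then show ?thesis using step.IH step.prems(1) by blast
  qed
qed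

end



context presctx begin

definition tree_ok :: "nat \<Rightarrow> (nat \<Rightarrow> nat) \<Rightarrow> (nat \<Rightarrow> nat) \<Rightarrow> bool" where
  "tree_ok k v e \<longleftrightarrow> v 0 = 0 \<and> inj_on v {..k} \<and> v ` {..k} \<subseteq> {..<n} \<and>
    (\<forall>l\<in>{1..k}. e l < m \<and> ((src (e l) = v l \<and> tgt (e l) \<in> v ` {..<l}) \<or> (tgt (e l) = v l \<and> src (e l) \<in> v ` {..<l})))"

definition pot_ok :: "nat \<Rightarrow> (nat \<Rightarrow> nat) \<Rightarrow> (nat \<Rightarrow> nat) \<Rightarrow> (nat \<Rightarrow> 'b) \<Rightarrow> (nat \<Rightarrow> (nat fqterm set \<times> nat fqterm set \<Rightarrow>\<^sub>0 int)) \<Rightarrow> bool" where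
  "pot_ok k v e p P \<longleftrightarrow> (\<forall>l\<in>{1..k}. defect p (e l) = 0) \<and>
    (\<forall>x\<in>v ` {..k}. P x \<in> chains (Q \<times> Q) \<and> bd2 opQ (P x) = frag_of (cls (Gen 0)) - frag_of (cls (Gen x))
       \<and> cocycle_lin phi (P x) = p x)"

lemma tree_edge_ends: assumes "tree_ok k v e" "l \<in> {1..k}"
  shows "src (e l) \<in> v ` {..l}" "tgt (e l) \<in> v ` {..l}"
proof -
  have h: "(src (e l) = v l \<and> tgt (e l) \<in> v ` {..<l}) \<or> (tgt (e l) = v l \<and> src (e l) \<in> v ` {..<l})"
    using assms unfolding tree_ok_def by blast
  have "v l \<in> v ` {..l}" "v ` {..<l} \<subseteq> v ` {..l}" by auto
  then show "src (e l) \<in> v ` {..l}" "tgt (e l) \<in> v ` {..l}" using h by blast+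
qed

lemma extend_step:
  assumes T: "tree_ok k v e" and P: "pot_ok k v e p P" and i: "i < m"
    and tt: "(ta = w1 i \<and> tu = w2 i) \<or> (ta = w2 i \<and> tu = w1 i)"
    and a: "base ta \<in> v ` {..k}" and u: "base tu \<notin> v ` {..k}"
  shows "\<exists>v e p P. tree_ok (Suc k) v e \<and> pot_ok (Suc k) v e p P"
proof -
  let ?a = "base ta" and ?u = "base tu"
  define v' where "v' = v(Suc k := ?u)"
  define e' where "e' = e(Suc k := i)"
  define p' where "p' = p(?u := p ?a + al ta - al tu)"
  define P' where "P' = P(?u := P ?a + chn cls ta - chn cls tu)"
  have rp: "wf_term n (w1 i)" "wf_term n (w2 i)" "cls (w1 i) = cls (w2 i)" "src i < n" "tgt i < n"
    using rel_props[OF i] by auto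
  have wta: "wf_term n ta" "wf_term n tu" "cls ta = cls tu" using tt rp by auto
  have u_lt: "?u < n" using wf_base wta(2) by blast
  have S: "v' ` {..Suc k} = insert ?u (v ` {..k})"
    unfolding v'_def by (auto simp: atMost_Suc)
  have vv: "\<And>l. l \<le> k \<Longrightarrow> v' l = v l" unfolding v'_def by simp
  have ee: "\<And>l. l \<le> k \<Longrightarrow> e' l = e l" unfolding e'_def by simp
  have img: "\<And>l. l \<le> Suc k \<Longrightarrow> v' ` {..<l} = v ` {..<l}" unfolding v'_def by auto
  have T': "tree_ok (Suc k) v' e'"
    unfolding tree_ok_def
  proof (intro conjI)
    show "v' 0 = 0" using T unfolding tree_ok_def v'_def by simp
    show "inj_on v' {..Suc k}"
    proof -
      have "inj_on v' {..k}" using T vv unfolding tree_ok_def by (metis atMost_iff inj_on_cong)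
      moreover have "v' (Suc k) \<notin> v' ` {..k}" using u vv unfolding v'_def
        by (metis (no_types, lifting) atMost_iff fun_upd_same image_cong)
      ultimately show ?thesis by (simp add: atMost_Suc)
    qed
    show "v' ` {..Suc k} \<subseteq> {..<n}" unfolding S using T u_lt unfolding tree_ok_def by auto
    show "\<forall>l\<in>{1..Suc k}. e' l < m \<and> (src (e' l) = v' l \<and> tgt (e' l) \<in> v' ` {..<l} \<or>
           tgt (e' l) = v' l \<and> src (e' l) \<in> v' ` {..<l})"
    proof
      fix l assume l: "l \<in> {1..Suc k}"
      show "e' l < m \<and> (src (e' l) = v' l \<and> tgt (e' l) \<in> v' ` {..<l} \<or>
           tgt (e' l) = v' l \<and> src (e' l) \<in> v' ` {..<l})"
      proof (cases "l = Suc k")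
        case True
        have "v' ` {..<l} = v ` {..k}" using True img[of l] lessThan_Suc_atMost by simp
        then show ?thesis using True i tt a unfolding e'_def v'_def src_def tgt_def by auto
      next
        case False
        then have "l \<in> {1..k}" using l by auto
        then show ?thesis using T vv ee img[of l] unfolding tree_ok_def by auto
      qed
    qed
  qed
  have defi: "defect p' i = 0"
  proof -
    have "?a \<noteq> ?u" using a u by force
    then have "p' ?a = p ?a" "p' ?u = p ?a + al ta - al tu" unfolding p'_def by auto
    then show ?thesis using tt unfolding defect_def src_def tgt_def by (auto simp: algebra_simps)
  qed
  have P': "pot_ok (Suc k) v' e' p' P'"
    unfolding pot_ok_def
  proof (rule conjI; rule ballI)
    fix l assume l: "l \<in> {1..Suc k}"
    show "defect p' (e' l) = 0"
    proof (cases "l = Suc k")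
      case True then show ?thesis using defi unfolding e'_def by simp
    next
      case False
      then have l': "l \<in> {1..k}" using l by auto
      have "src (e l) \<in> v ` {..k}" "tgt (e l) \<in> v ` {..k}"
        using tree_edge_ends[OF T l'] l' by auto
      then have "src (e l) \<noteq> ?u" "tgt (e l) \<noteq> ?u" using u by auto
      then have "defect p' (e l) = defect p (e l)" unfolding defect_def p'_def by simp
      then show ?thesis using P l' ee[of l] unfolding pot_ok_def by auto
    qed
  next
    fix x assume x: "x \<in> v' ` {..Suc k}"
    show "P' x \<in> chains (Q \<times> Q) \<and> bd2 opQ (P' x) = frag_of (cls (Gen 0)) - frag_of (cls (Gen x)) \<and>
          cocycle_lin phi (P' x) = p' x"
    proof (cases "x = ?u")
      case True
      have Pa: "P ?a \<in> chains (Q \<times> Q)" "bd2 opQ (P ?a) = frag_of (cls (Gen 0)) - frag_of (cls (Gen ?a))"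
        "cocycle_lin phi (P ?a) = p ?a" using P a unfolding pot_ok_def by auto
      have "?a \<noteq> ?u" using a u by force
      then have px: "P' x = P ?a + chn cls ta - chn cls tu" "p' x = p ?a + al ta - al tu"
        using True unfolding P'_def p'_def by auto
      have c1: "P' x \<in> chains (Q \<times> Q)" unfolding px
        using Pa(1) chn_chains[OF wta(1)] chn_chains[OF wta(2)] by (intro chains_diff chains_add)
      have c2: "bd2 opQ (P' x) = frag_of (cls (Gen 0)) - frag_of (cls (Gen x))"
        unfolding px bd2_diff bd2_add Pa(2) chn_bd2[OF wta(1)] chn_bd2[OF wta(2)] wta(3)
        using True by simp
      have c3: "cocycle_lin phi (P' x) = p' x"
        unfolding px cocycle_lin_diff cocycle_lin_add Pa(3) chn_val ..
      show ?thesis using c1 c2 c3 by blast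
    next
      case False
      then have x': "x \<in> v ` {..k}" using x S by auto
      then have "P' x = P x" "p' x = p x" using False unfolding P'_def p'_def by auto
      then show ?thesis using P x' unfolding pot_ok_def by auto
    qed
  qed
  show ?thesis using T' P' by blast
qed

lemma tree_exists: "k < n \<Longrightarrow> \<exists>v e p P. tree_ok k v e \<and> pot_ok k v e p P"
proof (induction k)
  case 0
  have "tree_ok 0 (\<lambda>_. 0) (\<lambda>_. 0)" unfolding tree_ok_def using n_pos by auto
  moreover have "pot_ok 0 (\<lambda>_. 0) (\<lambda>_. 0) (\<lambda>_. 0) (\<lambda>_. 0)" unfolding pot_ok_def by auto
  ultimately show ?case by blast
next
  case (Suc k)
  then obtain v e p P where T: "tree_ok k v e" and P: "pot_ok k v e p P" by auto
  let ?S = "v ` {..k}"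
  have cardS: "card ?S = Suc k" using T unfolding tree_ok_def by (simp add: card_image)
  have sub: "?S \<subseteq> {..<n}" using T unfolding tree_ok_def by blast
  have "?S \<noteq> {..<n}" using cardS Suc.prems by auto
  then obtain w where w: "w < n" "w \<notin> ?S" using sub by blast
  have z: "0 \<in> ?S" using T unfolding tree_ok_def by force
  obtain i where i: "i < m" "(src i \<in> ?S \<and> tgt i \<notin> ?S) \<or> (tgt i \<in> ?S \<and> src i \<notin> ?S)"
    using crossing[OF connected_graph[OF w(1)] z w(2)] by blast
  show ?case
  proof (cases "src i \<in> ?S \<and> tgt i \<notin> ?S")
    case True
    show ?thesis
      by (rule extend_step[OF T P i(1), of "w1 i" "w2 i"]) (use True in \<open>auto simp: src_def tgt_def\<close>)
  next
    case False
    then have "tgt i \<in> ?S \<and> src i \<notin> ?S" using i(2) by blast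
    then show ?thesis
      by (intro extend_step[OF T P i(1), of "w2 i" "w1 i"]) (auto simp: src_def tgt_def)
  qed
qed

end



lemma pick_props: assumes "finite I" "k < card I"
  shows "pick I k \<in> I" "card {a\<in>I. a < pick I k} = k"
  using assms pick_in_set_le card_pick_le by auto

lemma card_less_in: fixes I :: "nat set" assumes "finite I" "r \<in> I" shows "card {a\<in>I. a < r} < card I"
proof -
  have "r \<notin> {a\<in>I. a < r}" by simp
  then have "{a\<in>I. a < r} \<subset> I" using assms(2) by blast
  then show ?thesis using assms(1) by (simp add: psubset_card_mono)
qed

lemma pick_inj: assumes "finite I" "k < card I" "k' < card I" "pick I k = pick I k'"
  shows "k = k'"
  using pick_props(2)[OF assms(1,2)] pick_props(2)[OF assms(1,3)] assms(4) by metis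

lemma pick_lessThan: "c < n \<Longrightarrow> pick {..<n} c = c"
proof -
  assume c: "c < n"
  have "card {a\<in>{..<n}. a < c} = c"
  proof -
    have "{a\<in>{..<n}. a < c} = {..<c}" using c by auto
    then show ?thesis by simp
  qed
  then show ?thesis using pick_card_in_set[of c "{..<n}"] c by simp
qed

lemma pick_remove:
  assumes fin: "finite I" and ia: "ia < card I" and k: "k < card I - 1"
  shows "pick (I - {pick I ia}) k = (if k < ia then pick I k else pick I (Suc k))"
proof -
  let ?a = "pick I ia"
  define b where "b = (if k < ia then pick I k else pick I (Suc k))"
  have aI: "?a \<in> I" using pick_props(1)[OF fin ia] .
  have bc: "b \<in> I - {?a} \<and> card {x\<in>I - {?a}. x < b} = k"
  proof (cases "k < ia")
    case True
    have kI: "k < card I" using True ia by linarith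
    have lt: "pick I k < ?a" using pick_mono_le[OF ia True] .
    have "{x\<in>I - {?a}. x < pick I k} = {x\<in>I. x < pick I k}" using lt by auto
    then show ?thesis
      using True pick_props[OF fin kI] lt unfolding b_def by auto
  next
    case False
    have kI: "Suc k < card I" using k by linarith
    have lt: "?a < pick I (Suc k)" using pick_mono_le[OF kI] False by simp
    have e: "{x\<in>I - {?a}. x < pick I (Suc k)} = {x\<in>I. x < pick I (Suc k)} - {?a}" by auto
    have "?a \<in> {x\<in>I. x < pick I (Suc k)}" using aI lt by simp
    then have "card {x\<in>I - {?a}. x < pick I (Suc k)} = Suc k - 1"
      unfolding e using pick_props(2)[OF fin kI] fin by (simp add: card_Diff_singleton)
    then show ?thesis
      using False pick_props(1)[OF fin kI] lt unfolding b_def by auto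
  qed
  then have bI: "b \<in> I - {?a}" and cb: "card {x\<in>I - {?a}. x < b} = k" by auto
  have "pick (I - {?a}) (card {x\<in>I - {?a}. x < b}) = b" using pick_card_in_set[OF bI] .
  then show ?thesis using cb unfolding b_def by simp
qed

lemma card_range_set: fixes I :: "nat set" shows "I \<subseteq> {..<N} \<Longrightarrow> {i. i < N \<and> i \<in> I} = I"
  by auto

lemma submatrix_carrier: assumes "I \<subseteq> {..<dim_row M}" "J \<subseteq> {..<dim_col M}"
  shows "submatrix M I J \<in> carrier_mat (card I) (card J)"
proof -
  have "dim_row (submatrix M I J) = card I" unfolding dim_submatrix(1) card_range_set[OF assms(1)] ..
  moreover have "dim_col (submatrix M I J) = card J" unfolding dim_submatrix(2) card_range_set[OF assms(2)] ..
  ultimately show ?thesis by (rule carrier_matI)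
qed

lemma submatrix_idx: assumes "I \<subseteq> {..<dim_row M}" "J \<subseteq> {..<dim_col M}" "i < card I" "j < card J"
  shows "submatrix M I J $$ (i, j) = M $$ (pick I i, pick J j)"
proof -
  have i: "i < card {i. i < dim_row M \<and> i \<in> I}" unfolding card_range_set[OF assms(1)] by (rule assms(3))
  have j: "j < card {j. j < dim_col M \<and> j \<in> J}" unfolding card_range_set[OF assms(2)] by (rule assms(4))
  show ?thesis by (rule submatrix_index[OF i j])
qed

lemma mat_delete_submatrix:
  assumes I: "I \<subseteq> {..<dim_row M}" and J: "J \<subseteq> {..<dim_col M}"
    and ia: "ia < card I" and jb: "jb < card J"
  shows "mat_delete (submatrix M I J) ia jb = submatrix M (I - {pick I ia}) (J - {pick J jb})"
proof -
  have finI: "finite I" by (rule finite_subset[OF I]) simp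
  have finJ: "finite J" by (rule finite_subset[OF J]) simp
  have I': "I - {pick I ia} \<subseteq> {..<dim_row M}" and J': "J - {pick J jb} \<subseteq> {..<dim_col M}" using I J by auto
  have cI: "card (I - {pick I ia}) = card I - 1" using pick_props(1)[OF finI ia] finI by simp
  have cJ: "card (J - {pick J jb}) = card J - 1" using pick_props(1)[OF finJ jb] finJ by simp
  show ?thesis
  proof (rule eq_matI)
    show "dim_row (mat_delete (submatrix M I J) ia jb) = dim_row (submatrix M (I - {pick I ia}) (J - {pick J jb}))"
      using submatrix_carrier[OF I J] submatrix_carrier[OF I' J'] cI by simp
    show "dim_col (mat_delete (submatrix M I J) ia jb) = dim_col (submatrix M (I - {pick I ia}) (J - {pick J jb}))"
      using submatrix_carrier[OF I J] submatrix_carrier[OF I' J'] cJ by simp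
    fix i j assume i: "i < dim_row (submatrix M (I - {pick I ia}) (J - {pick J jb}))"
      and j: "j < dim_col (submatrix M (I - {pick I ia}) (J - {pick J jb}))"
    have i': "i < card I - 1" and j': "j < card J - 1"
      using i j submatrix_carrier[OF I' J'] cI cJ by auto
    have "mat_delete (submatrix M I J) ia jb $$ (i, j) =
      submatrix M I J $$ (if i < ia then i else Suc i, if j < jb then j else Suc j)"
      unfolding mat_delete_def using i' j' submatrix_carrier[OF I J] by simp
    also have "\<dots> = M $$ (pick I (if i < ia then i else Suc i), pick J (if j < jb then j else Suc j))"
      by (rule submatrix_idx[OF I J]) (use i' j' in auto)
    also have "\<dots> = M $$ (pick (I - {pick I ia}) i, pick (J - {pick J jb}) j)"
      using pick_remove[OF finI ia i'] pick_remove[OF finJ jb j'] by (simp add: if_distrib)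
    also have "\<dots> = submatrix M (I - {pick I ia}) (J - {pick J jb}) $$ (i, j)"
      by (rule submatrix_idx[OF I' J', symmetric]) (use i' j' cI cJ in auto)
    finally show "mat_delete (submatrix M I J) ia jb $$ (i, j) = submatrix M (I - {pick I ia}) (J - {pick J jb}) $$ (i, j)" .
  qed
qed

lemma laplace_single:
  assumes A: "(A :: 'a :: comm_ring_1 mat) \<in> carrier_mat n n" and i: "i < n" and j: "j < n"
    and z: "\<And>i'. i' < n \<Longrightarrow> i' \<noteq> i \<Longrightarrow> A $$ (i', j) = 0"
  shows "det A = A $$ (i, j) * cofactor A i j"
proof -
  have "det A = (\<Sum>i'<n. A $$ (i', j) * cofactor A i' j)" by (rule laplace_expansion_column[OF A j])
  also have "\<dots> = A $$ (i, j) * cofactor A i j + (\<Sum>i'\<in>{..<n} - {i}. A $$ (i', j) * cofactor A i' j)"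
    by (rule sum.remove) (use i in auto)
  also have "(\<Sum>i'\<in>{..<n} - {i}. A $$ (i', j) * cofactor A i' j) = 0"
  proof (rule sum.neutral, rule ballI)
    fix i' assume "i' \<in> {..<n} - {i}"
    then have "A $$ (i', j) = 0" using z by blast
    then show "A $$ (i', j) * cofactor A i' j = 0" by (simp only: mult_zero_left)
  qed
  finally show ?thesis by (simp only: add_0_right)
qed

lemma unit_neg1_pow: "((-1 :: 'a :: comm_ring_1) ^ k) dvd 1"
proof -
  have "(-1 :: 'a) ^ k * (-1) ^ k = ((-1) * (-1)) ^ k" by (simp only: power_mult_distrib)
  also have "\<dots> = 1" by simp
  finally have "(-1 :: 'a) ^ k * (-1) ^ k = 1" .
  then show ?thesis by (rule dvdI[OF HOL.sym])
qed

lemma unit_mult: "(a :: 'a :: comm_ring_1) dvd 1 \<Longrightarrow> b dvd 1 \<Longrightarrow> a * b dvd 1"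
  using mult_dvd_mono[of a 1 b 1] by simp

lemma det_empty: "det (submatrix M {} {}) = 1"
proof -
  have "submatrix M {} {} = 1\<^sub>m 0" by (rule eq_matI) (auto simp: dim_submatrix)
  then show ?thesis by simp
qed

lemma tri_unit:
  fixes M :: "'a :: comm_ring_1 mat" and k :: nat and e v :: "nat \<Rightarrow> nat"
  assumes "inj_on e {1..k}" "inj_on v {1..k}" "e ` {1..k} \<subseteq> {..<dim_row M}" "v ` {1..k} \<subseteq> {..<dim_col M}"
    "\<forall>l\<in>{1..k}. M $$ (e l, v l) dvd 1"
    "\<forall>l\<in>{1..k}. \<forall>l'\<in>{1..k}. l' < l \<longrightarrow> M $$ (e l', v l) = 0"
  shows "det (submatrix M (e ` {1..k}) (v ` {1..k})) dvd 1"
  using assms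
proof (induction k)
  case 0 then show ?case by (simp add: det_empty)
next
  case (Suc k)
  let ?I = "e ` {1..Suc k}" and ?J = "v ` {1..Suc k}"
  let ?r = "e (Suc k)" and ?c = "v (Suc k)"
  have finI: "finite ?I" and finJ: "finite ?J" by auto
  have cI: "card ?I = Suc k" using Suc.prems(1) by (simp add: card_image)
  have cJ: "card ?J = Suc k" using Suc.prems(2) by (simp add: card_image)
  have rI: "?r \<in> ?I" and cJm: "?c \<in> ?J" by auto
  define ir where "ir = card {a\<in>?I. a < ?r}"
  define jc where "jc = card {a\<in>?J. a < ?c}"
  have ir: "ir < Suc k" "pick ?I ir = ?r" unfolding ir_def using card_less_in[OF finI rI] cI pick_card_in_set[OF rI] by auto
  have jc: "jc < Suc k" "pick ?J jc = ?c" unfolding jc_def using card_less_in[OF finJ cJm] cJ pick_card_in_set[OF cJm] by auto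
  define N where "N = submatrix M ?I ?J"
  have N: "N \<in> carrier_mat (Suc k) (Suc k)" unfolding N_def using submatrix_carrier[OF Suc.prems(3,4)] cI cJ by simp
  have zero: "N $$ (i', jc) = 0" if "i' < Suc k" "i' \<noteq> ir" for i'
  proof -
    have "pick ?I i' \<in> ?I" using pick_props(1)[OF finI] that cI by simp
    then obtain l' where l': "l' \<in> {1..Suc k}" "pick ?I i' = e l'" by blast
    have "l' \<noteq> Suc k" using l' that ir pick_inj[OF finI, of i' ir] cI by auto
    then have "l' < Suc k" using l' by auto
    then have "M $$ (e l', ?c) = 0" using Suc.prems(6) l' by auto
    moreover have "N $$ (i', jc) = M $$ (pick ?I i', pick ?J jc)"
      unfolding N_def by (rule submatrix_idx[OF Suc.prems(3,4)]) (use that jc cI cJ in auto)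
    ultimately show ?thesis using l' jc by simp
  qed
  have "det N = N $$ (ir, jc) * cofactor N ir jc"
    by (rule laplace_single[OF N ir(1) jc(1)]) (use zero in auto)
  moreover have "N $$ (ir, jc) = M $$ (?r, ?c)"
    unfolding N_def using submatrix_idx[OF Suc.prems(3,4), of ir jc] ir jc cI cJ by simp
  moreover have "mat_delete N ir jc = submatrix M (e ` {1..k}) (v ` {1..k})"
  proof -
    have "mat_delete N ir jc = submatrix M (?I - {?r}) (?J - {?c})"
      unfolding N_def using mat_delete_submatrix[OF Suc.prems(3,4), of ir jc] ir jc cI cJ by simp
    moreover have "?I - {?r} = e ` {1..k}"
    proof -
      have "{1..Suc k} = insert (Suc k) {1..k}" by auto
      then show ?thesis using Suc.prems(1) by (auto simp: inj_on_def)
    qed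
    moreover have "?J - {?c} = v ` {1..k}"
    proof -
      have "{1..Suc k} = insert (Suc k) {1..k}" by auto
      then show ?thesis using Suc.prems(2) by (auto simp: inj_on_def)
    qed
    ultimately show ?thesis by simp
  qed
  moreover have "det (submatrix M (e ` {1..k}) (v ` {1..k})) dvd 1"
  proof (rule Suc.IH)
    show "inj_on e {1..k}" using Suc.prems(1) by (rule inj_on_subset) auto
    show "inj_on v {1..k}" using Suc.prems(2) by (rule inj_on_subset) auto
    have "e ` {1..k} \<subseteq> e ` {1..Suc k}" "v ` {1..k} \<subseteq> v ` {1..Suc k}" by auto
    then show "e ` {1..k} \<subseteq> {..<dim_row M}" "v ` {1..k} \<subseteq> {..<dim_col M}"
      using Suc.prems(3,4) by (meson subset_trans)+
    show "\<forall>l\<in>{1..k}. M $$ (e l, v l) dvd 1" using Suc.prems(5) by auto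
    show "\<forall>l\<in>{1..k}. \<forall>l'\<in>{1..k}. l' < l \<longrightarrow> M $$ (e l', v l) = 0" using Suc.prems(6) by auto
  qed
  moreover have "M $$ (?r, ?c) dvd 1" using Suc.prems(5) by auto
  ultimately show ?case unfolding N_def cofactor_def
    using unit_mult unit_neg1_pow by metis
qed

lemma adj_identity:
  fixes N :: "'a :: comm_ring_1 mat"
  assumes N: "N \<in> carrier_mat n n" and r: "r < n"
  shows "det N * y r = (\<Sum>k<n. cofactor N k r * (\<Sum>c<n. N $$ (k, c) * y c))"
proof -
  have A: "adj_mat N * N = det N \<cdot>\<^sub>m 1\<^sub>m n" using adj_mat[OF N] by simp
  have adjc: "adj_mat N \<in> carrier_mat n n" using adj_mat[OF N] by simp
  have ent: "(\<Sum>k<n. cofactor N k r * N $$ (k, c)) = (if r = c then det N else 0)" if c: "c < n" for c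
  proof -
    have "(adj_mat N * N) $$ (r, c) = row (adj_mat N) r \<bullet> col N c" using adjc N r c by simp
    also have "\<dots> = (\<Sum>k \<in> {0..<n}. row (adj_mat N) r $ k * col N c $ k)"
      unfolding scalar_prod_def using N by simp
    also have "\<dots> = (\<Sum>k<n. cofactor N k r * N $$ (k, c))"
      using adjc N r c by (auto simp: adj_mat_def lessThan_atLeast0 intro!: sum.cong)
    finally have "(adj_mat N * N) $$ (r, c) = (\<Sum>k<n. cofactor N k r * N $$ (k, c))" .
    moreover have "(adj_mat N * N) $$ (r, c) = (if r = c then det N else 0)"
      unfolding A using r c by simp
    ultimately show ?thesis by simp
  qed
  have "(\<Sum>k<n. cofactor N k r * (\<Sum>c<n. N $$ (k, c) * y c)) =
        (\<Sum>k<n. \<Sum>c<n. cofactor N k r * N $$ (k, c) * y c)"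
    by (simp add: sum_distrib_left mult.assoc)
  also have "\<dots> = (\<Sum>c<n. \<Sum>k<n. cofactor N k r * N $$ (k, c) * y c)" by (rule sum.swap)
  also have "\<dots> = (\<Sum>c<n. (\<Sum>k<n. cofactor N k r * N $$ (k, c)) * y c)"
    by (simp add: sum_distrib_right)
  also have "\<dots> = (\<Sum>c<n. (if r = c then det N * y c else 0))"
    using ent by (intro sum.cong) auto
  also have "\<dots> = det N * y r" using r by simp
  finally show ?thesis by simp
qed




lemma gr_unit: "gr (a::'b::ab_group_add) * gr (- a) = 1"
  by (simp add: gr_mult)

lemma gr_dvd1: "gr (a::'b::ab_group_add) dvd 1"
  using gr_unit[of a] by (metis dvdI)

lemma neg_gr_dvd1: "- gr (a::'b::ab_group_add) dvd 1"
proof -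
  have "- gr a * - gr (- a) = 1" using gr_unit[of a] by simp
  then show ?thesis by (metis dvdI)
qed

context presctx begin

definition Mx :: "('b \<Rightarrow>\<^sub>0 int) mat" where "Mx = alex_matrix n rs ev \<theta>"

lemma Mx_dims: "dim_row Mx = m" "dim_col Mx = n"
  unfolding Mx_def alex_matrix_def by simp_all

lemma Mx_entry: assumes "i < m" "j < n"
  shows "Mx $$ (i, j) = (if src i = j then gr (al (w1 i)) else 0) - (if tgt i = j then gr (al (w2 i)) else 0)"
  unfolding Mx_def alex_matrix_def using assms
  by (simp add: fox_alpha src_def tgt_def w1_def w2_def)

lemma sum_if_eq: fixes f :: "nat \<Rightarrow> 'r::comm_ring_1"
  assumes "a < n" shows "(\<Sum>c<n. (if a = c then f c else 0)) = f a"
  using assms by simp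

lemma rowsum: assumes i: "i < m"
  shows "(\<Sum>c<n. Mx $$ (i, c) * gr (p c)) = gr (al (w2 i) + p (tgt i)) * (gr (defect p i) - 1)"
proof -
  have st: "src i < n" "tgt i < n" using rel_props[OF i] by auto
  have "(\<Sum>c<n. Mx $$ (i, c) * gr (p c)) =
        (\<Sum>c<n. (if src i = c then gr (al (w1 i)) * gr (p c) else 0) - (if tgt i = c then gr (al (w2 i)) * gr (p c) else 0))"
    by (rule sum.cong) (auto simp: Mx_entry[OF i] left_diff_distrib)
  also have "\<dots> = (\<Sum>c<n. (if src i = c then gr (al (w1 i)) * gr (p c) else 0)) - (\<Sum>c<n. (if tgt i = c then gr (al (w2 i)) * gr (p c) else 0))"
    by (rule sum_subtractf)
  also have "\<dots> = gr (al (w1 i)) * gr (p (src i)) - gr (al (w2 i)) * gr (p (tgt i))"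
    using st by simp
  also have "\<dots> = gr (al (w1 i) + p (src i)) - gr (al (w2 i) + p (tgt i))"
    by (simp add: gr_mult)
  also have "\<dots> = gr (al (w2 i) + p (tgt i)) * gr (defect p i) - gr (al (w2 i) + p (tgt i))"
  proof -
    have "al (w2 i) + p (tgt i) + defect p i = al (w1 i) + p (src i)"
      unfolding defect_def by (simp add: algebra_simps)
    then show ?thesis by (simp add: gr_mult)
  qed
  also have "\<dots> = gr (al (w2 i) + p (tgt i)) * (gr (defect p i) - 1)"
    by (simp add: right_diff_distrib)
  finally show ?thesis .
qed

lemma minor_identity:
  assumes I: "I \<subseteq> {..<m}" and cI: "card I = n"
  shows "det (submatrix Mx I {..<n}) * gr (p 0) =
    (\<Sum>k<n. cofactor (submatrix Mx I {..<n}) k 0 *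
        (gr (al (w2 (pick I k)) + p (tgt (pick I k))) * (gr (defect p (pick I k)) - 1)))"
proof -
  let ?N = "submatrix Mx I {..<n}"
  have I': "I \<subseteq> {..<dim_row Mx}" and J': "{..<n} \<subseteq> {..<dim_col Mx}" using I Mx_dims by auto
  have N: "?N \<in> carrier_mat n n" using submatrix_carrier[OF I' J'] cI by simp
  have finI: "finite I" by (rule finite_subset[OF I]) simp
  have "det ?N * gr (p 0) = (\<Sum>k<n. cofactor ?N k 0 * (\<Sum>c<n. ?N $$ (k, c) * gr (p c)))"
    by (rule adj_identity[OF N n_pos])
  also have "\<dots> = (\<Sum>k<n. cofactor ?N k 0 *
        (gr (al (w2 (pick I k)) + p (tgt (pick I k))) * (gr (defect p (pick I k)) - 1)))"
  proof (rule sum.cong[OF HOL.refl])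
    fix k assume k: "k \<in> {..<n}"
    have pk: "pick I k \<in> I" using pick_props(1)[OF finI] k cI by simp
    then have pkm: "pick I k < m" using I by auto
    have "(\<Sum>c<n. ?N $$ (k, c) * gr (p c)) = (\<Sum>c<n. Mx $$ (pick I k, c) * gr (p c))"
    proof (rule sum.cong[OF HOL.refl])
      fix c assume c: "c \<in> {..<n}"
      have "?N $$ (k, c) = Mx $$ (pick I k, pick {..<n} c)"
        by (rule submatrix_idx[OF I' J']) (use k c cI in auto)
      then show "?N $$ (k, c) * gr (p c) = Mx $$ (pick I k, c) * gr (p c)"
        using pick_lessThan c by simp
    qed
    also have "\<dots> = gr (al (w2 (pick I k)) + p (tgt (pick I k))) * (gr (defect p (pick I k)) - 1)"
      by (rule rowsum[OF pkm])
    finally show "cofactor ?N k 0 * (\<Sum>c<n. ?N $$ (k, c) * gr (p c)) =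
        cofactor ?N k 0 * (gr (al (w2 (pick I k)) + p (tgt (pick I k))) * (gr (defect p (pick I k)) - 1))"
      by simp
  qed
  finally show ?thesis .
qed

end



context presctx begin

abbreviation "ImS \<equiv> (\<lambda>h. cocycle_H2 \<theta> (induced_H2 X opX \<rho> h)) ` H2Q Q opQ"

lemma ImS_eq: "ImS = {cocycle_lin phi z | z. z \<in> chains (Q \<times> Q) \<and> bd2 opQ z = 0}"
proof -
  have "phi = (\<lambda>x y. \<theta> (\<rho> x) (\<rho> y))" by (simp add: phi_def fun_eq_iff)
  then show ?thesis using image_H2[OF hom coc qQ] by simp
qed

lemma main_theorem: "E0 Mx = ideal_gen {gr a - gr 0 | a. a \<in> ImS}"
proof -
  let ?G = "{gr a - gr 0 | a. a \<in> ImS}"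
  have n1: "n - 1 < n" using n_pos by simp
  obtain v e p P where T: "tree_ok (n - 1) v e" and Pk: "pot_ok (n - 1) v e p P"
    using tree_exists[OF n1] by blast
  have v0: "v 0 = 0" and vinj: "inj_on v {..n - 1}" and vsub: "v ` {..n - 1} \<subseteq> {..<n}"
    using T unfolding tree_ok_def by auto
  have edge: "\<And>l. l \<in> {1..n - 1} \<Longrightarrow> e l < m \<and> ((src (e l) = v l \<and> tgt (e l) \<in> v ` {..<l}) \<or> (tgt (e l) = v l \<and> src (e l) \<in> v ` {..<l}))"
    using T unfolding tree_ok_def by blast
  have vimg: "v ` {..n - 1} = {..<n}"
  proof (rule card_subset_eq)
    show "finite {..<n}" by simp
    show "v ` {..n - 1} \<subseteq> {..<n}" by (rule vsub)
    show "card (v ` {..n - 1}) = card {..<n}" using vinj n_pos by (simp add: card_image)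
  qed
  have split: "{..n - 1} = insert 0 {1..n - 1}" by auto
  have v1: "v ` {1..n - 1} = {..<n} - {0}"
  proof -
    have "0 \<notin> v ` {1..n - 1}"
    proof
      assume "0 \<in> v ` {1..n - 1}"
      then obtain l where l: "l \<in> {1..n - 1}" "v l = 0" by (metis imageE)
      have "l \<in> {..n - 1}" "0 \<in> {..n - 1}" using l(1) by auto
      then have "l = 0" using inj_onD[OF vinj, of l 0] l(2) v0 by simp
      then show False using l by simp
    qed
    then show ?thesis using vimg v0 split by auto
  qed
  have vinj1: "inj_on v {1..n - 1}" using vinj by (rule inj_on_subset) auto
  have Pk2: "\<forall>x\<in>v ` {..n - 1}. P x \<in> chains (Q \<times> Q) \<and> bd2 opQ (P x) = frag_of (cls (Gen 0)) - frag_of (cls (Gen x))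
       \<and> cocycle_lin phi (P x) = p x" using Pk unfolding pot_ok_def by (rule conjunct2)
  have Pall: "P x \<in> chains (Q \<times> Q) \<and> bd2 opQ (P x) = frag_of (cls (Gen 0)) - frag_of (cls (Gen x))
       \<and> cocycle_lin phi (P x) = p x" if "x < n" for x
  proof -
    have "x \<in> v ` {..n - 1}" using that vimg by simp
    then show ?thesis by (rule bspec[OF Pk2])
  qed
  have Pk1: "\<forall>l\<in>{1..n - 1}. defect p (e l) = 0" using Pk unfolding pot_ok_def by (rule conjunct1)
  have tdef: "defect p (e l) = 0" if "l \<in> {1..n - 1}" for l using Pk1 that by (rule bspec)
  have vnot: "v l \<notin> v ` {..l'}" if "l \<in> {1..n - 1}" "l' < l" for l l'
  proof
    assume "v l \<in> v ` {..l'}"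
    then obtain l'' where l'': "v l = v l''" "l'' \<in> {..l'}" by (rule imageE)
    have "l \<in> {..n - 1}" "l'' \<in> {..n - 1}" using that l'' by auto
    then have "l'' = l" using inj_onD[OF vinj, of l l''] l''(1) by simp
    then show False using l''(2) that by simp
  qed
  have vnot2: "v l \<notin> v ` {..<l}" if "l \<in> {1..n - 1}" for l
  proof -
    have "{..<l} = {..l - 1}" using that by auto
    then have "v ` {..<l} = v ` {..l - 1}" by simp
    moreover have "l - 1 < l" using that by auto
    ultimately show ?thesis using vnot[OF that, of "l - 1"] by simp
  qed
  have einj: "inj_on e {1..n - 1}"
  proof (rule inj_onI)
    fix l l' assume l: "l \<in> {1..n - 1}" and l': "l' \<in> {1..n - 1}" and eq: "e l = e l'"
    show "l = l'"
    proof (rule ccontr)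
      assume ne: "l \<noteq> l'"
      have key: False if a: "a \<in> {1..n - 1}" "b \<in> {1..n - 1}" "a < b" "e a = e b" for a b
      proof -
        have s1: "src (e b) \<in> v ` {..a}" "tgt (e b) \<in> v ` {..a}" using tree_edge_ends[OF T a(1)] a(4) by simp_all
        have s2: "src (e b) = v b \<or> tgt (e b) = v b" using edge[OF a(2)] by blast
        have s3: "v b \<notin> v ` {..a}" by (rule vnot[OF a(2) a(3)])
        show False using s1 s2 s3 by metis
      qed
      show False
      proof (cases "l < l'")
        case True show False by (rule key[OF l l' True eq])
      next
        case False then have "l' < l" using ne by simp
        then show False using key[OF l' l _ eq[symmetric]] by simp
      qed
    qed
  qed
  have esub: "e ` {1..n - 1} \<subseteq> {..<m}" using edge by auto
  have cardE: "card (e ` {1..n - 1}) = n - 1" using einj by (simp add: card_image)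
  have defIm: "defect p i \<in> ImS" if i: "i < m" for i
  proof -
    have rp: "wf_term n (w1 i)" "wf_term n (w2 i)" "cls (w1 i) = cls (w2 i)" "src i < n" "tgt i < n"
      using rel_props[OF i] by auto
    define z where "z = chn cls (w1 i) - chn cls (w2 i) + P (src i) - P (tgt i)"
    have Ps: "P (src i) \<in> chains (Q \<times> Q)" "bd2 opQ (P (src i)) = frag_of (cls (Gen 0)) - frag_of (cls (Gen (src i)))"
      "cocycle_lin phi (P (src i)) = p (src i)" using Pall[OF rp(4)] by auto
    have Pt: "P (tgt i) \<in> chains (Q \<times> Q)" "bd2 opQ (P (tgt i)) = frag_of (cls (Gen 0)) - frag_of (cls (Gen (tgt i)))"
      "cocycle_lin phi (P (tgt i)) = p (tgt i)" using Pall[OF rp(5)] by auto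
    have zc: "z \<in> chains (Q \<times> Q)" unfolding z_def
      using chn_chains[OF rp(1)] chn_chains[OF rp(2)] Ps(1) Pt(1)
      by (intro chains_diff chains_add)
    have zb: "bd2 opQ z = 0" unfolding z_def bd2_diff bd2_add chn_bd2[OF rp(1)] chn_bd2[OF rp(2)] Ps(2) Pt(2) rp(3)
      unfolding src_def tgt_def by simp
    have zv: "cocycle_lin phi z = defect p i" unfolding z_def cocycle_lin_diff cocycle_lin_add chn_val Ps(3) Pt(3)
      unfolding defect_def by (simp add: algebra_simps)
    show ?thesis unfolding ImS_eq
      by (rule CollectI, rule exI[of _ z]) (use zc zb zv in simp)
  qed
  have sub1: "E0 Mx \<subseteq> ideal_gen ?G"
  proof (cases "n \<le> m")
    case False
    have "E0 Mx = {0}" unfolding E0_def Mx_dims if_not_P[OF False] by (rule HOL.refl)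
    then show ?thesis using is_ideal_0[OF ideal_gen_ideal] by auto
  next
    case True
    have "E0 Mx = ideal_gen {det (submatrix Mx I {..<n}) | I. I \<subseteq> {..<m} \<and> card I = n}"
      unfolding E0_def Mx_dims if_P[OF True] by (rule HOL.refl)
    also have "\<dots> \<subseteq> ideal_gen ?G"
    proof (rule ideal_gen_least[OF ideal_gen_ideal], rule subsetI)
      fix d assume "d \<in> {det (submatrix Mx I {..<n}) | I. I \<subseteq> {..<m} \<and> card I = n}"
      then obtain I where I: "I \<subseteq> {..<m}" "card I = n" "d = det (submatrix Mx I {..<n})" by blast
      have finI: "finite I" by (rule finite_subset[OF I(1)]) simp
      have "d * gr (p 0) \<in> ideal_gen ?G"
        unfolding I(3) minor_identity[OF I(1,2)]
      proof (rule is_ideal_sum[OF ideal_gen_ideal])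
        fix k assume k: "k \<in> {..<n}"
        have "pick I k \<in> I" using pick_props(1)[OF finI] k I(2) by simp
        then have pk: "pick I k < m" using I(1) by auto
        have "gr (defect p (pick I k)) - gr 0 \<in> ?G" using defIm[OF pk] by blast
        then have "gr (defect p (pick I k)) - gr 0 \<in> ideal_gen ?G" by (rule ideal_gen_base)
        then have "gr (defect p (pick I k)) - 1 \<in> ideal_gen ?G" by (simp only: gr_zero)
        then show "cofactor (submatrix Mx I {..<n}) k 0 *
          (gr (al (w2 (pick I k)) + p (tgt (pick I k))) * (gr (defect p (pick I k)) - 1)) \<in> ideal_gen ?G"
          by (intro is_ideal_mult[OF ideal_gen_ideal])
      qed
      then have "d * gr (p 0) * gr (- p 0) \<in> ideal_gen ?G" by (rule is_ideal_mult2[OF ideal_gen_ideal])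
      then show "d \<in> ideal_gen ?G" using gr_unit[of "p 0"] by (simp add: mult.assoc)
    qed
    finally show ?thesis .
  qed
  define W where "W = {a. gr a - gr 0 \<in> E0 Mx}"
  have J: "is_ideal (E0 Mx)" by (rule E0_ideal)
  have W: "subgrp W" unfolding subgrp_def
  proof (intro conjI ballI)
    show "0 \<in> W" unfolding W_def using is_ideal_0[OF J] by simp
  next
    fix a b assume a: "a \<in> W" and b: "b \<in> W"
    have e: "gr (a + b) - gr 0 = gr a * (gr b - gr 0) + (gr a - gr 0)"
      by (simp add: gr_mult[symmetric] right_diff_distrib)
    have "gr a * (gr b - gr 0) \<in> E0 Mx" using b unfolding W_def mem_Collect_eq by (rule is_ideal_mult[OF J])
    moreover have "gr a - gr 0 \<in> E0 Mx" using a unfolding W_def by simp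
    ultimately have "gr a * (gr b - gr 0) + (gr a - gr 0) \<in> E0 Mx" by (rule is_ideal_add[OF J])
    then show "a + b \<in> W" unfolding W_def mem_Collect_eq e .
  next
    fix a assume a: "a \<in> W"
    have e: "gr (- a) - gr 0 = - (gr (- a) * (gr a - gr 0))"
      by (simp add: gr_mult right_diff_distrib)
    have "gr (- a) * (gr a - gr 0) \<in> E0 Mx" using a unfolding W_def mem_Collect_eq by (rule is_ideal_mult[OF J])
    then have "- (gr (- a) * (gr a - gr 0)) \<in> E0 Mx" by (rule is_ideal_uminus[OF J])
    then show "- a \<in> W" unfolding W_def mem_Collect_eq e .
  qed
  have defW: "\<forall>i<m. defect p i \<in> W"
  proof (intro allI impI)
    fix i assume i: "i < m"
    show "defect p i \<in> W"
    proof (cases "i \<in> e ` {1..n - 1}")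
      case True
      then obtain l where "l \<in> {1..n - 1}" "i = e l" by blast
      then have "defect p i = 0" using tdef by simp
      then show ?thesis using subgrp_0[OF W] by simp
    next
      case False
      define I where "I = insert i (e ` {1..n - 1})"
      have Isub: "I \<subseteq> {..<m}" unfolding I_def using esub i by auto
      have finI: "finite I" unfolding I_def by simp
      have cI: "card I = n" unfolding I_def using False cardE n_pos by simp
      have nm: "n \<le> m" using card_mono[OF _ Isub] cI by simp
      let ?N = "submatrix Mx I {..<n}"
      have dE: "det ?N \<in> E0 Mx"
        unfolding E0_def Mx_dims if_P[OF nm] by (rule ideal_gen_base) (use Isub cI in blast)
      define ki where "ki = card {a\<in>I. a < i}"
      have iI: "i \<in> I" unfolding I_def by simp
      have ki: "ki < n" "pick I ki = i" unfolding ki_def using card_less_in[OF finI iI] cI pick_card_in_set[OF iI] by auto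
      have I': "I \<subseteq> {..<dim_row Mx}" and J': "{..<n} \<subseteq> {..<dim_col Mx}" using Isub Mx_dims by auto
      have N: "?N \<in> carrier_mat n n" using submatrix_carrier[OF I' J'] cI by simp
      define x where "x = al (w2 i) + p (tgt i)"
      define t where "t = gr (defect p i) - 1"
      have "det ?N * gr (p 0) = (\<Sum>k<n. cofactor ?N k 0 *
        (gr (al (w2 (pick I k)) + p (tgt (pick I k))) * (gr (defect p (pick I k)) - 1)))"
        by (rule minor_identity[OF Isub cI])
      also have "\<dots> = cofactor ?N ki 0 * (gr x * t)"
      proof -
        let ?f = "\<lambda>k. cofactor ?N k 0 * (gr (al (w2 (pick I k)) + p (tgt (pick I k))) * (gr (defect p (pick I k)) - 1))"
        have "(\<Sum>k<n. ?f k) = ?f ki + (\<Sum>k\<in>{..<n} - {ki}. ?f k)"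
          by (rule sum.remove) (use ki in auto)
        moreover have "(\<Sum>k\<in>{..<n} - {ki}. ?f k) = 0"
        proof (rule sum.neutral, rule ballI)
          fix k assume k: "k \<in> {..<n} - {ki}"
          have "pick I k \<in> I" using pick_props(1)[OF finI] k cI by simp
          moreover have "pick I k \<noteq> i" using pick_inj[OF finI, of k ki] k ki cI by auto
          ultimately obtain l where "l \<in> {1..n - 1}" "pick I k = e l" unfolding I_def by blast
          then have "defect p (pick I k) = 0" using tdef by simp
          then show "?f k = 0" by simp
        qed
        ultimately show ?thesis unfolding x_def t_def using ki(2) by simp
      qed
      finally have eq1: "det ?N * gr (p 0) = cofactor ?N ki 0 * (gr x * t)" .
      have md: "mat_delete ?N ki 0 = submatrix Mx (e ` {1..n - 1}) (v ` {1..n - 1})"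
      proof -
        have "mat_delete ?N ki 0 = submatrix Mx (I - {pick I ki}) ({..<n} - {pick {..<n} 0})"
          by (rule mat_delete_submatrix[OF I' J']) (use ki n_pos cI in auto)
        moreover have "I - {pick I ki} = e ` {1..n - 1}" using ki(2) False unfolding I_def by auto
        moreover have "{..<n} - {pick {..<n} 0} = v ` {1..n - 1}" using pick_lessThan[OF n_pos] v1 by simp
        ultimately show ?thesis by simp
      qed
      have Du: "det (submatrix Mx (e ` {1..n - 1}) (v ` {1..n - 1})) dvd 1"
      proof (rule tri_unit[OF einj vinj1])
        show "e ` {1..n - 1} \<subseteq> {..<dim_row Mx}" using esub Mx_dims by simp
        show "v ` {1..n - 1} \<subseteq> {..<dim_col Mx}" using v1 Mx_dims by auto
        show "\<forall>l\<in>{1..n - 1}. Mx $$ (e l, v l) dvd 1"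
        proof
          fix l assume l: "l \<in> {1..n - 1}"
          have el: "e l < m" using edge[OF l] by blast
          have vl: "v l < n" using v1 l by auto
          have nv: "v l \<notin> v ` {..<l}" by (rule vnot2[OF l])
          show "Mx $$ (e l, v l) dvd 1"
          proof (cases "src (e l) = v l \<and> tgt (e l) \<in> v ` {..<l}")
            case True
            then have "tgt (e l) \<noteq> v l" using nv by auto
            then show ?thesis using True Mx_entry[OF el vl] gr_dvd1 by simp
          next
            case False
            then have "tgt (e l) = v l \<and> src (e l) \<in> v ` {..<l}" using edge[OF l] by blast
            then have "src (e l) \<noteq> v l" "tgt (e l) = v l" using nv by auto
            then show ?thesis using Mx_entry[OF el vl] neg_gr_dvd1 by simp
          qed
        qed
        show "\<forall>l\<in>{1..n - 1}. \<forall>l'\<in>{1..n - 1}. l' < l \<longrightarrow> Mx $$ (e l', v l) = 0"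
        proof (intro ballI impI)
          fix l l' assume l: "l \<in> {1..n - 1}" and l': "l' \<in> {1..n - 1}" and lt: "l' < l"
          have el: "e l' < m" using edge[OF l'] by blast
          have vl: "v l < n" using v1 l by auto
          have "src (e l') \<in> v ` {..l'}" "tgt (e l') \<in> v ` {..l'}" using tree_edge_ends[OF T l'] by auto
          then have "src (e l') \<noteq> v l" "tgt (e l') \<noteq> v l" using vnot[OF l lt] by auto
          then show "Mx $$ (e l', v l) = 0" using Mx_entry[OF el vl] by simp
        qed
      qed
      let ?D = "det (submatrix Mx (e ` {1..n - 1}) (v ` {1..n - 1}))"
      from Du obtain D' where D': "1 = ?D * D'" by (rule dvdE)
      define c :: "'b \<Rightarrow>\<^sub>0 int" where "c = (-1) ^ ki"
      have cc: "c * c = 1"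
      proof -
        have "c * c = ((-1) * (-1)) ^ ki" unfolding c_def by (simp only: power_mult_distrib)
        also have "\<dots> = 1" by simp
        finally show ?thesis .
      qed
      have cof: "cofactor ?N ki 0 = c * ?D"
        unfolding cofactor_def md c_def by simp
      have gx: "gr x * gr (- x) = 1" by (rule gr_unit)
      have "t = (c * c) * (?D * D') * (gr x * gr (- x)) * t" unfolding cc D'[symmetric] gx by simp
      also have "\<dots> = (c * ?D * (gr x * t)) * (c * D' * gr (- x))" by (simp only: mult_ac)
      also have "\<dots> = det ?N * gr (p 0) * (c * D' * gr (- x))" by (simp only: eq1 cof)
      also have "\<dots> = det ?N * (gr (p 0) * (c * D' * gr (- x)))" by (simp only: mult_ac)
      finally have teq: "t = det ?N * (gr (p 0) * (c * D' * gr (- x)))" .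
      have "det ?N * (gr (p 0) * (c * D' * gr (- x))) \<in> E0 Mx" by (rule is_ideal_mult2[OF J dE])
      then have "t \<in> E0 Mx" unfolding teq[symmetric] .
      then have "gr (defect p i) - gr 0 \<in> E0 Mx" unfolding t_def by (simp only: gr_zero)
      then show ?thesis unfolding W_def by (rule CollectI)
    qed
  qed
  have ImW: "ImS \<subseteq> W"
  proof
    fix a assume "a \<in> ImS"
    then obtain z where z: "z \<in> chains (Q \<times> Q)" "bd2 opQ z = 0" "a = cocycle_lin phi z"
      unfolding ImS_eq by blast
    show "a \<in> W" unfolding z(3) by (rule cycle_in_W[OF W defW z(1,2)])
  qed
  have sub2: "ideal_gen ?G \<subseteq> E0 Mx"
  proof (rule ideal_gen_least[OF J])
    show "?G \<subseteq> E0 Mx" using ImW unfolding W_def by blast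
  qed
  show ?thesis using sub1 sub2 by blast
qed

end

theorem theorem5p1:
  fixes n :: nat
    and rs :: "(nat fqterm \<times> nat fqterm) list"
    and X :: "'a set" and opX :: "'a \<Rightarrow> 'a \<Rightarrow> 'a"
    and \<theta> :: "'a \<Rightarrow> 'a \<Rightarrow> 'b::ab_group_add"
    and \<rho> :: "nat fqterm set \<Rightarrow> 'a"
  assumes "0 < n"
    and "\<forall>(s, t) \<in> set rs. wf_term n s \<and> wf_term n t"
    and "quandle_connected (pres_car n (set rs)) (pres_op n (set rs))"
    and "quandle X opX"
    and "quandle_2cocycle X opX \<theta>"
    and "quandle_hom (pres_car n (set rs)) (pres_op n (set rs)) X opX \<rho>"
  shows "E0 (alex_matrix n rs (\<lambda>t. \<rho> (pres_class n (set rs) t)) \<theta>) =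
         ideal_gen {gr a - gr 0 | a. a \<in>
            (\<lambda>h. cocycle_H2 \<theta> (induced_H2 X opX \<rho> h)) ` H2Q (pres_car n (set rs)) (pres_op n (set rs))}"
proof -
  interpret presctx n rs X opX \<theta> \<rho>
    using assms by (unfold_locales) auto
  have "ev = (\<lambda>t. \<rho> (pres_class n (set rs) t))" by (rule ext) (simp add: ev_def)
  then have "alex_matrix n rs (\<lambda>t. \<rho> (pres_class n (set rs) t)) \<theta> = Mx" unfolding Mx_def by simp
  then show ?thesis using main_theorem by simp
qed

end
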